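(* Let $\mathcal{A}=(\omega,f)$ and $\mathcal{B}=(\omega,g)$ be computable (2,1):1 structures that are isomorphic, and suppose that the branching functions $\beta_{\mathcal{A}},\beta_{\mathcal{B}}$ and the branch isomorphism functions $iso_{\mathcal{A}}, iso_{\mathcal{B}}$ are all computable. (i) If $a_0\in\omega$ is a non-cyclic element of $\mathcal{A}$ and $b_0\in\omega$ is a non-cyclic element of $\mathcal{B}$ with $Tree_{\mathcal{A}}(a_0)\cong Tree_{\mathcal{B}}(b_0)$, then there is a computable isomorphism from $Tree_{\mathcal{A}}(a_0)$ onto $Tree_{\mathcal{B}}(b_0)$ (i.e. a partial computable function defined on all of $tree_{\mathcal{A}}(a_0)$ whose restriction there is such an isomorphism). (ii) If $c$ is a cyclic element of $\mathcal{A}$ and $d$ is a cyclic element of $\mathcal{B}$ with $exTree_{\mathcal{A}}(c)\cong exTree_{\mathcal{B}}(d)$, then there is a computable isomorphism from $exTree_{\mathcal{A}}(c)$ onto $exTree_{\mathcal{B}}(d)$.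
   Context: A (2,1):1 structure is a pair $\mathcal{A}=(A,f)$ with $A$ a countable set and $f:A\to A$ such that $|f^{-1}(a)|\in\{1,2\}$ for every $a\in A$. It is computable if $A$ is a computable set (here $A=\omega$) and $f$ is a computable function. An element $x$ is cyclic if $f^n(x)=x$ for some $n>0$. For $x\in A$, $tree_{\mathcal{A}}(x)=\{a\in A:\exists n\ge 0\ (f^n(a)=x)\}$, and $Tree_{\mathcal{A}}(x)$ is the directed graph with vertex set $tree_{\mathcal{A}}(x)$ and edge set $\{(a,f(a)): a\in tree_{\mathcal{A}}(x),\ f(a)\in tree_{\mathcal{A}}(x)\}$. If $c$ is a cyclic element lying on a directed cycle with exactly $K$ elements, $extree_{\mathcal{A}}(c)=\{a\in A: \exists n\,[f^n(a)=c \wedge \forall m<n\ (f^{m+K}(a)\neq f^m(a))]\}$ (i.e. $c$ together with the non-cyclic elements whose forward orbit first reaches the cycle at $c$), and $exTree_{\mathcal{A}}(c)$ is the associated directed graph with vertex set $extree_{\mathcal{A}}(c)$ and edges $(a,f(a))$ for $a\in extree_{\mathcal{A}}(c)$, $a\ne c$ (a rooted tree with root $c$). The branching function $\beta_{\mathcal{A}}:A\to\{1,2\}$ is $\beta_{\mathcal{A}}(x)=|f^{-1}(x)|$. The split hair set is $\Lambda_{\mathcal{A}}=\{x:\beta_{\mathcal{A}}(x)=2\}$. The branch isomorphism function $iso_{\mathcal{A}}:\Lambda_{\mathcal{A}}\to\{0,1\}$ is defined, for $x\in\Lambda_{\mathcal{A}}$ with distinct pre-images $x_1,x_2$, by $iso_{\mathcal{A}}(x)=1$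 if $Tree_{\mathcal{A}}(x_1)\cong Tree_{\mathcal{A}}(x_2)$ and $iso_{\mathcal{A}}(x)=0$ otherwise; "computable" for $iso_{\mathcal{A}}$ means it is the restriction to $\Lambda_{\mathcal{A}}$ of a partial computable function. *)

theory Defs
  imports Main
begin

datatype recf = Z | S | Id nat | Cn recf "recf list" | Pr recf recf | Mn recf

inductive eval :: "recf \<Rightarrow> nat list \<Rightarrow> nat \<Rightarrow> bool" where
  eval_Z: "eval Z xs 0"
| eval_S: "eval S (x # xs) (Suc x)"
| eval_Id: "i < length xs \<Longrightarrow> eval (Id i) xs (xs ! i)"
| eval_Cn: "list_all2 (\<lambda>g y. eval g xs y) gs ys \<Longrightarrow> eval f ys z \<Longrightarrow> eval (Cn f gs) xs z"
| eval_Pr0: "eval f xs y \<Longrightarrow> eval (Pr f g) (0 # xs) y"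
| eval_PrS: "eval (Pr f g) (n # xs) y \<Longrightarrow> eval g (n # y # xs) z \<Longrightarrow> eval (Pr f g) (Suc n # xs) z"
| eval_Mn: "eval f (n # xs) 0 \<Longrightarrow> (\<forall>m<n. \<exists>y. eval f (m # xs) (Suc y)) \<Longrightarrow> eval (Mn f) xs n"

definition partial_computable :: "(nat \<Rightarrow> nat option) \<Rightarrow> bool" where
  "partial_computable h \<longleftrightarrow> (\<exists>e. \<forall>x y. eval e [x] y \<longleftrightarrow> h x = Some y)"

definition computable :: "(nat \<Rightarrow> nat) \<Rightarrow> bool" where
  "computable h \<longleftrightarrow> partial_computable (\<lambda>x. Some (h x))"

definition is_21_1 :: "(nat \<Rightarrow> nat) \<Rightarrow> bool" where
  "is_21_1 f \<longleftrightarrow> (\<forall>a. card (f -` {a}) \<in> {1, 2})"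

definition struct_iso :: "(nat \<Rightarrow> nat) \<Rightarrow> (nat \<Rightarrow> nat) \<Rightarrow> bool" where
  "struct_iso f g \<longleftrightarrow> (\<exists>h. bij h \<and> (\<forall>x. h (f x) = g (h x)))"

definition cyclic :: "(nat \<Rightarrow> nat) \<Rightarrow> nat \<Rightarrow> bool" where
  "cyclic f x \<longleftrightarrow> (\<exists>n>0. (f ^^ n) x = x)"

definition branching :: "(nat \<Rightarrow> nat) \<Rightarrow> nat \<Rightarrow> nat" where
  "branching f x = card (f -` {x})"

definition split_hair :: "(nat \<Rightarrow> nat) \<Rightarrow> nat set" where
  "split_hair f = {x. branching f x = 2}"

definition tree :: "(nat \<Rightarrow> nat) \<Rightarrow> nat \<Rightarrow> nat set" where
  "tree f x = {a. \<exists>n. (f ^^ n) a = x}"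

definition digraph_iso ::
  "(nat \<Rightarrow> nat \<Rightarrow> bool) \<Rightarrow> nat set \<Rightarrow> (nat \<Rightarrow> nat \<Rightarrow> bool) \<Rightarrow> nat set \<Rightarrow> (nat \<Rightarrow> nat) \<Rightarrow> bool" where
  "digraph_iso E V E' V' h \<longleftrightarrow> bij_betw h V V' \<and> (\<forall>a\<in>V. \<forall>b\<in>V. E a b \<longleftrightarrow> E' (h a) (h b))"

text \<open>Edge relation of Tree(x): edges (a, f a) with both endpoints in the tree.\<close>
definition tree_edge :: "(nat \<Rightarrow> nat) \<Rightarrow> nat \<Rightarrow> nat \<Rightarrow> bool" where
  "tree_edge f a b \<longleftrightarrow> f a = b"

definition Tree_iso :: "(nat \<Rightarrow> nat) \<Rightarrow> nat \<Rightarrow> (nat \<Rightarrow> nat) \<Rightarrow> nat \<Rightarrow> (nat \<Rightarrow> nat) \<Rightarrow> bool" where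
  "Tree_iso f x g y h \<longleftrightarrow> digraph_iso (tree_edge f) (tree f x) (tree_edge g) (tree g y) h"

definition Tree_isomorphic :: "(nat \<Rightarrow> nat) \<Rightarrow> nat \<Rightarrow> (nat \<Rightarrow> nat) \<Rightarrow> nat \<Rightarrow> bool" where
  "Tree_isomorphic f x g y \<longleftrightarrow> (\<exists>h. Tree_iso f x g y h)"

text \<open>Branch isomorphism function (meaningful on the split hair set).\<close>
definition iso_fun :: "(nat \<Rightarrow> nat) \<Rightarrow> nat \<Rightarrow> nat" where
  "iso_fun f x = (if \<exists>x1 x2. x1 \<noteq> x2 \<and> f x1 = x \<and> f x2 = x \<and> Tree_isomorphic f x1 f x2 then 1 else 0)"

definition iso_computable :: "(nat \<Rightarrow> nat) \<Rightarrow> bool" where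
  "iso_computable f \<longleftrightarrow> (\<exists>\<phi>. partial_computable \<phi> \<and> (\<forall>x\<in>split_hair f. \<phi> x = Some (iso_fun f x)))"

definition cycle_len :: "(nat \<Rightarrow> nat) \<Rightarrow> nat \<Rightarrow> nat" where
  "cycle_len f c = (LEAST k. k > 0 \<and> (f ^^ k) c = c)"

definition extree :: "(nat \<Rightarrow> nat) \<Rightarrow> nat \<Rightarrow> nat set" where
  "extree f c = {a. \<exists>n. (f ^^ n) a = c \<and> (\<forall>m<n. (f ^^ (m + cycle_len f c)) a \<noteq> (f ^^ m) a)}"

definition extree_edge :: "(nat \<Rightarrow> nat) \<Rightarrow> nat \<Rightarrow> nat \<Rightarrow> nat \<Rightarrow> bool" where
  "extree_edge f c a b \<longleftrightarrow> a \<noteq> c \<and> f a = b"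

definition exTree_iso :: "(nat \<Rightarrow> nat) \<Rightarrow> nat \<Rightarrow> (nat \<Rightarrow> nat) \<Rightarrow> nat \<Rightarrow> (nat \<Rightarrow> nat) \<Rightarrow> bool" where
  "exTree_iso f c g d h \<longleftrightarrow> digraph_iso (extree_edge f c) (extree f c) (extree_edge g d) (extree g d) h"

end

theory Submission
  imports Defs "HOL-Library.Nat_Bijection"
begin

lemma eval_det: "eval e xs y \<Longrightarrow> eval e xs y' \<Longrightarrow> y' = y"
proof (induction arbitrary: y' rule: eval.induct)
  case (eval_Z xs) from eval_Z.prems show ?case by (cases rule: eval.cases) auto
next
  case (eval_S x xs) from eval_S.prems show ?case by (cases rule: eval.cases) auto
next
  case (eval_Id i xs) from eval_Id.prems show ?case by (cases rule: eval.cases) auto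
next
  case (eval_Cn xs gs ys f z)
  from eval_Cn.prems obtain ys' where A: "list_all2 (\<lambda>g y. eval g xs y) gs ys'" "eval f ys' y'"
    by (cases rule: eval.cases) auto
  have L: "list_all2 (\<lambda>g y. \<forall>y'. eval g xs y' \<longrightarrow> y' = y) gs ys"
    using eval_Cn.IH(1) by (auto simp: list_all2_conv_all_nth)
  have "ys' = ys" using L A(1)
    by (auto simp: list_all2_conv_all_nth intro: nth_equalityI)
  then show ?case using A eval_Cn.IH(2) by auto
next
  case (eval_Pr0 f xs y) from eval_Pr0.prems show ?case by (cases rule: eval.cases) (use eval_Pr0.IH in auto)
next
  case (eval_PrS f g n xs y z)
  from eval_PrS.prems show ?case
    by (cases rule: eval.cases) (use eval_PrS.IH in auto)
next
  case (eval_Mn f n xs)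
  from eval_Mn.prems obtain n' where B: "eval f (n' # xs) 0" "\<forall>m<n'. \<exists>y. eval f (m # xs) (Suc y)" "y' = n'"
    by (cases rule: eval.cases) auto
  show ?case
  proof (rule ccontr)
    assume "y' \<noteq> n"
    then have "n' < n \<or> n < n'" using B by auto
    then show False
    proof
      assume "n' < n"
      then obtain y where "eval f (n' # xs) (Suc y) \<and> (\<forall>y'. eval f (n' # xs) y' \<longrightarrow> y' = Suc y)"
        using eval_Mn.IH(2) by blast
      then show False using B by force
    next
      assume "n < n'"
      then obtain y where "eval f (n # xs) (Suc y)" using B by blast
      then show False using eval_Mn.IH(1) by force
    qed
  qed
qed

definition tc :: "nat \<Rightarrow> (nat list \<Rightarrow> nat) \<Rightarrow> bool" where
  "tc n F \<longleftrightarrow> (\<exists>e. \<forall>xs. length xs = n \<longrightarrow> eval e xs (F xs))"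

definition pc :: "nat \<Rightarrow> (nat list \<Rightarrow> nat option) \<Rightarrow> bool" where
  "pc n F \<longleftrightarrow> (\<exists>e. \<forall>xs. length xs = n \<longrightarrow> (\<forall>y. eval e xs y \<longleftrightarrow> F xs = Some y))"

lemma tc_prog: "tc n F \<Longrightarrow> \<exists>e. \<forall>xs. length xs = n \<longrightarrow> (\<forall>y. eval e xs y \<longleftrightarrow> y = F xs)"
  unfolding tc_def using eval_det by blast

lemma pc_of_tc: "tc n F \<Longrightarrow> pc n (\<lambda>xs. Some (F xs))"
proof -
  assume "tc n F"
  from tc_prog[OF this] obtain e where "\<forall>xs. length xs = n \<longrightarrow> (\<forall>y. eval e xs y = (y = F xs))" by blast
  then show ?thesis unfolding pc_def by (intro exI[of _ e]) auto
qed

lemma tc_of_pc: "pc n (\<lambda>xs. Some (F xs)) \<Longrightarrow> tc n F"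
  unfolding pc_def tc_def by auto

lemma tc_cong: "tc n F \<Longrightarrow> (\<And>xs. length xs = n \<Longrightarrow> F xs = G xs) \<Longrightarrow> tc n G"
  unfolding tc_def by auto

lemma pc_cong: "pc n F \<Longrightarrow> (\<And>xs. length xs = n \<Longrightarrow> F xs = G xs) \<Longrightarrow> pc n G"
  unfolding pc_def by auto

primrec constp :: "nat \<Rightarrow> recf" where
  "constp 0 = Z"
| "constp (Suc c) = Cn S [constp c]"

lemma eval_constp: "eval (constp c) xs c"
  by (induction c) (auto intro!: eval.intros)

lemma tc_const: "tc n (\<lambda>xs. c)"
  unfolding tc_def using eval_constp by blast

lemma tc_proj: "i < n \<Longrightarrow> tc n (\<lambda>xs. xs ! i)"
  unfolding tc_def by (auto intro!: exI[of _ "Id i"] eval.intros)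

lemma tc_Suc1: "tc 1 (\<lambda>xs. Suc (xs ! 0))"
  unfolding tc_def
  apply (rule exI[of _ S])
  apply (auto simp: length_Suc_conv intro: eval.intros)
  done

lemma tc_comp:
  assumes H: "tc m H" and len: "length Gs = m" and G: "\<forall>G\<in>set Gs. tc n G"
  shows "tc n (\<lambda>xs. H (map (\<lambda>G. G xs) Gs))"
proof -
  obtain eh where eh: "\<forall>xs. length xs = m \<longrightarrow> eval eh xs (H xs)" using H unfolding tc_def by blast
  define es where "es = map (\<lambda>G. SOME e. \<forall>xs. length xs = n \<longrightarrow> eval e xs (G xs)) Gs"
  have es: "\<forall>i<length Gs. \<forall>xs. length xs = n \<longrightarrow> eval (es ! i) xs ((Gs ! i) xs)"
  proof (intro allI impI)
    fix i and xs :: "nat list" assume i: "i < length Gs" and xs: "length xs = n"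
    have "\<exists>e. \<forall>xs. length xs = n \<longrightarrow> eval e xs ((Gs ! i) xs)" using G i unfolding tc_def by auto
    then have "\<forall>xs. length xs = n \<longrightarrow> eval (SOME e. \<forall>xs. length xs = n \<longrightarrow> eval e xs ((Gs ! i) xs)) xs ((Gs ! i) xs)"
      by (rule someI_ex)
    then show "eval (es ! i) xs ((Gs ! i) xs)" using i xs unfolding es_def by auto
  qed
  show ?thesis unfolding tc_def
  proof (intro exI[of _ "Cn eh es"] allI impI)
    fix xs :: "nat list" assume xs: "length xs = n"
    show "eval (Cn eh es) xs (H (map (\<lambda>G. G xs) Gs))"
      apply (rule eval_Cn[where ys = "map (\<lambda>G. G xs) Gs"])
      using es xs len eh apply (auto simp: list_all2_conv_all_nth es_def)
      done
  qed
qed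

lemma pc_comp1:
  assumes D: "pc 1 D" and Sl: "tc n Sl"
  shows "pc n (\<lambda>xs. D [Sl xs])"
proof -
  obtain ed where ed: "\<forall>xs. length xs = 1 \<longrightarrow> (\<forall>y. eval ed xs y \<longleftrightarrow> D xs = Some y)" using D unfolding pc_def by blast
  obtain es where es: "\<forall>xs. length xs = n \<longrightarrow> (\<forall>y. eval es xs y \<longleftrightarrow> y = Sl xs)" using tc_prog[OF Sl] by blast
  show ?thesis unfolding pc_def
  proof (intro exI[of _ "Cn ed [es]"] allI impI)
    fix y and xs :: "nat list" assume xs: "length xs = n"
    show "eval (Cn ed [es]) xs y = (D [Sl xs] = Some y)"
    proof
      assume "eval (Cn ed [es]) xs y"
      then show "D [Sl xs] = Some y"
        by (cases rule: eval.cases) (use ed es xs in \<open>auto simp: list_all2_Cons1\<close>)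
    next
      assume "D [Sl xs] = Some y"
      then show "eval (Cn ed [es]) xs y"
        using ed es xs by (auto intro!: eval_Cn[where ys = "[Sl xs]"])
    qed
  qed
qed

lemma eval_ids: "length xs = n \<Longrightarrow> list_all2 (\<lambda>g y. eval g xs y) (map Id [0..<n]) xs"
  by (auto simp: list_all2_conv_all_nth intro: eval_Id)

lemma eval_ids_inv: "length xs = n \<Longrightarrow> list_all2 (\<lambda>g y. eval g xs y) (map Id [0..<n]) ys \<Longrightarrow> ys = xs"
  by (auto simp: list_all2_conv_all_nth intro!: nth_equalityI elim: eval.cases)

lemma pc_let:
  assumes A: "pc n A" and B: "tc (Suc n) B"
  shows "pc n (\<lambda>xs. case A xs of None \<Rightarrow> None | Some y \<Rightarrow> Some (B (y # xs)))"
proof -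
  obtain ea where ea: "\<forall>xs. length xs = n \<longrightarrow> (\<forall>y. eval ea xs y \<longleftrightarrow> A xs = Some y)" using A unfolding pc_def by blast
  obtain eb where eb: "\<forall>xs. length xs = Suc n \<longrightarrow> (\<forall>y. eval eb xs y \<longleftrightarrow> y = B xs)" using tc_prog[OF B] by blast
  show ?thesis unfolding pc_def
  proof (intro exI[of _ "Cn eb (ea # map Id [0..<n])"] allI impI)
    fix z and xs :: "nat list" assume xs: "length xs = n"
    show "eval (Cn eb (ea # map Id [0..<n])) xs z = ((case A xs of None \<Rightarrow> None | Some y \<Rightarrow> Some (B (y # xs))) = Some z)"
    proof
      assume "eval (Cn eb (ea # map Id [0..<n])) xs z"
      then obtain ys where "list_all2 (\<lambda>g y. eval g xs y) (ea # map Id [0..<n]) ys" "eval eb ys z"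
        by (cases rule: eval.cases) auto
      then obtain y ys' where "ys = y # ys'" "eval ea xs y" "list_all2 (\<lambda>g y. eval g xs y) (map Id [0..<n]) ys'" "eval eb ys z"
        by (auto simp: list_all2_Cons1)
      moreover have "ys' = xs" using eval_ids_inv[OF xs] \<open>list_all2 (\<lambda>g y. eval g xs y) (map Id [0..<n]) ys'\<close> by auto
      ultimately show "(case A xs of None \<Rightarrow> None | Some y \<Rightarrow> Some (B (y # xs))) = Some z"
        using ea eb xs by auto
    next
      assume "(case A xs of None \<Rightarrow> None | Some y \<Rightarrow> Some (B (y # xs))) = Some z"
      then obtain y where y: "A xs = Some y" "z = B (y # xs)" by (auto split: option.splits)
      show "eval (Cn eb (ea # map Id [0..<n])) xs z"
        apply (rule eval_Cn[where ys = "y # xs"])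
        using y ea eb xs eval_ids[OF xs] by auto
    qed
  qed
qed

primrec rec_iter :: "(nat list \<Rightarrow> nat) \<Rightarrow> (nat list \<Rightarrow> nat) \<Rightarrow> nat \<Rightarrow> nat list \<Rightarrow> nat" where
  "rec_iter I St 0 xs = I xs"
| "rec_iter I St (Suc k) xs = St (k # rec_iter I St k xs # xs)"

lemma tc_pr:
  assumes I: "tc n I" and St: "tc (Suc (Suc n)) St"
  shows "tc (Suc n) (\<lambda>ys. rec_iter I St (hd ys) (tl ys))"
proof -
  obtain ei where ei: "\<forall>xs. length xs = n \<longrightarrow> eval ei xs (I xs)" using I unfolding tc_def by blast
  obtain es where es: "\<forall>xs. length xs = Suc (Suc n) \<longrightarrow> eval es xs (St xs)" using St unfolding tc_def by blast
  have "eval (Pr ei es) (k # xs) (rec_iter I St k xs)" if "length xs = n" for k xs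
    using that proof (induction k)
    case 0 then show ?case using ei by (auto intro: eval.intros)
  next
    case (Suc k)
    then show ?case using es by (auto intro!: eval_PrS)
  qed
  then show ?thesis unfolding tc_def by (intro exI[of _ "Pr ei es"]) (auto simp: length_Suc_conv)
qed

lemma tc_iter:
  assumes I: "tc n I" and St: "tc (Suc (Suc n)) St" and K: "tc n K"
  shows "tc n (\<lambda>xs. rec_iter I St (K xs) xs)"
proof -
  have "tc n (\<lambda>xs. (\<lambda>ys. rec_iter I St (hd ys) (tl ys)) (map (\<lambda>G. G xs) (K # map (\<lambda>i xs. xs ! i) [0..<n])))"
    by (rule tc_comp[OF tc_pr[OF I St]]) (auto intro: K tc_proj)
  then show ?thesis
    by (rule tc_cong) (auto intro!: nth_equalityI arg_cong[where f="rec_iter I St (K _)"])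
qed

primrec piter :: "(nat list \<Rightarrow> nat option) \<Rightarrow> (nat list \<Rightarrow> nat option) \<Rightarrow> nat \<Rightarrow> nat list \<Rightarrow> nat option" where
  "piter I St 0 xs = I xs"
| "piter I St (Suc k) xs = (case piter I St k xs of None \<Rightarrow> None | Some y \<Rightarrow> St (k # y # xs))"

lemma pc_pr:
  assumes I: "pc n I" and St: "pc (Suc (Suc n)) St"
  shows "pc (Suc n) (\<lambda>ys. piter I St (hd ys) (tl ys))"
proof -
  obtain ei where ei: "\<forall>xs. length xs = n \<longrightarrow> (\<forall>y. eval ei xs y \<longleftrightarrow> I xs = Some y)" using I unfolding pc_def by blast
  obtain es where es: "\<forall>xs. length xs = Suc (Suc n) \<longrightarrow> (\<forall>y. eval es xs y \<longleftrightarrow> St xs = Some y)" using St unfolding pc_def by blast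
  have "\<forall>y. eval (Pr ei es) (k # xs) y \<longleftrightarrow> piter I St k xs = Some y" if "length xs = n" for k xs
  proof (induction k)
    case 0
    show ?case
    proof (intro allI iffI)
      fix y assume "eval (Pr ei es) (0 # xs) y" then show "piter I St 0 xs = Some y"
        by (cases rule: eval.cases) (use ei that in auto)
    next
      fix y assume "piter I St 0 xs = Some y" then show "eval (Pr ei es) (0 # xs) y"
        using ei that by (auto intro: eval.intros)
    qed
  next
    case (Suc k)
    show ?case
    proof (intro allI iffI)
      fix y assume "eval (Pr ei es) (Suc k # xs) y" then show "piter I St (Suc k) xs = Some y"
        by (cases rule: eval.cases) (use es that Suc in auto)
    next
      fix y assume "piter I St (Suc k) xs = Some y" then show "eval (Pr ei es) (Suc k # xs) y"
        using es that Suc by (auto intro: eval.intros split: option.splits)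
    qed
  qed
  then show ?thesis unfolding pc_def by (intro exI[of _ "Pr ei es"]) (auto simp: length_Suc_conv)
qed

lemma tc_mn:
  assumes P: "tc (Suc n) P" and ex: "\<And>xs. length xs = n \<Longrightarrow> \<exists>k. P (k # xs) = 0"
  shows "tc n (\<lambda>xs. LEAST k. P (k # xs) = 0)"
proof -
  obtain ep where ep: "\<forall>xs. length xs = Suc n \<longrightarrow> eval ep xs (P xs)" using P unfolding tc_def by blast
  show ?thesis unfolding tc_def
  proof (intro exI[of _ "Mn ep"] allI impI)
    fix xs :: "nat list" assume xs: "length xs = n"
    let ?k = "LEAST k. P (k # xs) = 0"
    have k: "P (?k # xs) = 0" using ex[OF xs] by (rule LeastI_ex)
    have "\<forall>m<?k. \<exists>y. eval ep (m # xs) (Suc y)"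
    proof (intro allI impI)
      fix m assume "m < ?k"
      then have "P (m # xs) \<noteq> 0" using not_less_Least by blast
      then obtain y where "P (m # xs) = Suc y" using not0_implies_Suc by blast
      then show "\<exists>y. eval ep (m # xs) (Suc y)" using ep xs by (metis length_Cons)
    qed
    moreover have "eval ep (?k # xs) 0" using ep xs k by (metis length_Cons)
    ultimately show "eval (Mn ep) xs ?k" by (auto intro: eval_Mn)
  qed
qed

lemma pc_mn:
  assumes P: "tc (Suc n) P"
  shows "pc n (\<lambda>xs. if \<exists>k. P (k # xs) = 0 then Some (LEAST k. P (k # xs) = 0) else None)"
proof -
  obtain ep where ep: "\<forall>xs. length xs = Suc n \<longrightarrow> (\<forall>y. eval ep xs y \<longleftrightarrow> y = P xs)" using tc_prog[OF P] by blast
  show ?thesis unfolding pc_def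
  proof (intro exI[of _ "Mn ep"] allI impI)
    fix y and xs :: "nat list" assume xs: "length xs = n"
    show "eval (Mn ep) xs y = ((if \<exists>k. P (k # xs) = 0 then Some (LEAST k. P (k # xs) = 0) else None) = Some y)"
    proof
      assume "eval (Mn ep) xs y"
      then have "P (y # xs) = 0" "\<forall>m<y. P (m # xs) \<noteq> 0"
        by (cases rule: eval.cases; use ep xs in force)+
      then show "(if \<exists>k. P (k # xs) = 0 then Some (LEAST k. P (k # xs) = 0) else None) = Some y"
        by (auto intro!: Least_equality) (metis leI less_irrefl)
    next
      assume a: "(if \<exists>k. P (k # xs) = 0 then Some (LEAST k. P (k # xs) = 0) else None) = Some y"
      then have ex: "\<exists>k. P (k # xs) = 0" by (auto split: if_splits)
      with a have y: "y = (LEAST k. P (k # xs) = 0)" by auto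
      have k: "P (y # xs) = 0" using ex y by (auto intro: LeastI_ex)
      have "\<forall>m<y. \<exists>z. eval ep (m # xs) (Suc z)"
      proof (intro allI impI)
        fix m assume "m < y"
        then have "P (m # xs) \<noteq> 0" using not_less_Least y by blast
        then obtain z where "P (m # xs) = Suc z" using not0_implies_Suc by blast
        then show "\<exists>z. eval ep (m # xs) (Suc z)" using ep xs by (metis length_Cons)
      qed
      moreover have "eval ep (y # xs) 0" using ep xs k by (metis length_Cons)
      ultimately show "eval (Mn ep) xs y" by (auto intro: eval_Mn)
    qed
  qed
qed


lemma tc_app1: "tc 1 H \<Longrightarrow> tc n A \<Longrightarrow> tc n (\<lambda>xs. H [A xs])"
  using tc_comp[of 1 H "[A]" n] by auto

lemma tc_app2: "tc 2 H \<Longrightarrow> tc n A \<Longrightarrow> tc n B \<Longrightarrow> tc n (\<lambda>xs. H [A xs, B xs])"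
  using tc_comp[of 2 H "[A, B]" n] by auto

lemma tc_app3: "tc 3 H \<Longrightarrow> tc n A \<Longrightarrow> tc n B \<Longrightarrow> tc n C \<Longrightarrow> tc n (\<lambda>xs. H [A xs, B xs, C xs])"
  using tc_comp[of 3 H "[A, B, C]" n] by auto

lemma tc_app1': "tc 1 (\<lambda>ys. h (ys ! 0)) \<Longrightarrow> tc n A \<Longrightarrow> tc n (\<lambda>xs. h (A xs))"
  by (drule tc_app1) auto

lemma tc_app2': "tc 2 (\<lambda>ys. h (ys ! 0) (ys ! 1)) \<Longrightarrow> tc n A \<Longrightarrow> tc n B \<Longrightarrow> tc n (\<lambda>xs. h (A xs) (B xs))"
  by (drule tc_app2) auto

lemma tc_app3': "tc 3 (\<lambda>ys. h (ys ! 0) (ys ! 1) (ys ! 2)) \<Longrightarrow> tc n A \<Longrightarrow> tc n B \<Longrightarrow> tc n C \<Longrightarrow> tc n (\<lambda>xs. h (A xs) (B xs) (C xs))"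
  by (drule tc_app3) auto

lemma tc_Suc: "tc n A \<Longrightarrow> tc n (\<lambda>xs. Suc (A xs))"
  by (rule tc_app1'[OF tc_Suc1])

lemma tc_pr2: "tc n I \<Longrightarrow> tc (Suc m) St \<Longrightarrow> m = Suc n \<Longrightarrow> tc m (\<lambda>ys. rec_iter I St (ys ! 0) (tl ys))"
proof -
  assume a: "tc n I" "tc (Suc m) St" "m = Suc n"
  have "tc (Suc n) (\<lambda>ys. rec_iter I St (hd ys) (tl ys))" using tc_pr[of n I St] a by simp
  then have "tc (Suc n) (\<lambda>ys. rec_iter I St (ys ! 0) (tl ys))" by (rule tc_cong) (auto simp: length_Suc_conv)
  then show ?thesis using a(3) by simp
qed

lemma tc_add2: "tc 2 (\<lambda>ys. ys ! 0 + ys ! 1)"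
proof -
  have T: "tc 2 (\<lambda>ys. rec_iter (\<lambda>xs. xs ! 0) (\<lambda>ys. Suc (ys ! 1)) (ys ! 0) (tl ys))"
    by (rule tc_pr2[where n=1]; (intro tc_proj tc_Suc)?; simp)
  have E: "rec_iter (\<lambda>xs. xs ! 0) (\<lambda>ys. Suc (ys ! 1)) k xs = xs ! 0 + k" for k xs
    by (induction k) auto
  show ?thesis
    by (rule tc_cong[OF T]; subst E; auto simp: numeral_2_eq_2 length_Suc_conv)
qed

lemma tc_plus: "tc n A \<Longrightarrow> tc n B \<Longrightarrow> tc n (\<lambda>xs. A xs + B xs)"
  by (rule tc_app2'[OF tc_add2])

lemma tc_pred1: "tc 1 (\<lambda>ys. ys ! 0 - 1)"
proof -
  have T: "tc 1 (\<lambda>ys. rec_iter (\<lambda>xs. 0) (\<lambda>ys. ys ! 0) (ys ! 0) (tl ys))"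
    by (rule tc_pr2[where n=0]; (intro tc_proj tc_const)?; simp)
  have E: "rec_iter (\<lambda>xs. 0) (\<lambda>ys. ys ! 0) k xs = k - 1" for k xs
    by (induction k) auto
  show ?thesis by (rule tc_cong[OF T]; subst E; auto simp:)
qed

lemma tc_sub2: "tc 2 (\<lambda>ys. ys ! 1 - ys ! 0)"
proof -
  have T: "tc 2 (\<lambda>ys. rec_iter (\<lambda>xs. xs ! 0) (\<lambda>ys. ys ! 1 - 1) (ys ! 0) (tl ys))"
    by (rule tc_pr2[where n=1]; (intro tc_proj tc_app1'[OF tc_pred1])?; simp)
  have E: "rec_iter (\<lambda>xs. xs ! 0) (\<lambda>ys. ys ! 1 - 1) k xs = xs ! 0 - k" for k xs
    by (induction k) auto
  show ?thesis
    by (rule tc_cong[OF T]; subst E; auto simp: numeral_2_eq_2 length_Suc_conv)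
qed

lemma tc_minus: "tc n A \<Longrightarrow> tc n B \<Longrightarrow> tc n (\<lambda>xs. A xs - B xs)"
  by (rule tc_app2'[OF tc_sub2])

lemma tc_mul2: "tc 2 (\<lambda>ys. ys ! 0 * ys ! 1)"
proof -
  have T: "tc 2 (\<lambda>ys. rec_iter (\<lambda>xs. 0) (\<lambda>ys. ys ! 1 + ys ! 2) (ys ! 0) (tl ys))"
    by (rule tc_pr2[where n=1]; (intro tc_proj tc_const tc_plus)?; simp)
  have E: "rec_iter (\<lambda>xs. 0) (\<lambda>ys. ys ! 1 + ys ! 2) k xs = k * xs ! 0" for k xs
    by (induction k) auto
  show ?thesis
    by (rule tc_cong[OF T]; subst E; auto simp: numeral_2_eq_2 length_Suc_conv)
qed

lemma tc_times: "tc n A \<Longrightarrow> tc n B \<Longrightarrow> tc n (\<lambda>xs. A xs * B xs)"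
  by (rule tc_app2'[OF tc_mul2])

lemma tc_cond3: "tc 3 (\<lambda>ys. if ys ! 0 = 0 then ys ! 1 else ys ! 2)"
proof -
  have T: "tc 3 (\<lambda>ys. rec_iter (\<lambda>xs. xs ! 0) (\<lambda>ys. ys ! 3) (ys ! 0) (tl ys))"
    by (rule tc_pr2[where n=2]; (intro tc_proj)?; simp)
  have E: "rec_iter (\<lambda>xs. xs ! 0) (\<lambda>ys. ys ! 3) k xs = (if k = 0 then xs ! 0 else xs ! 1)" for k xs
    by (cases k) auto
  show ?thesis
    by (rule tc_cong[OF T]; subst E; auto simp: numeral_3_eq_3 length_Suc_conv)
qed

definition tcp :: "nat \<Rightarrow> (nat list \<Rightarrow> bool) \<Rightarrow> bool" where
  "tcp n P \<longleftrightarrow> tc n (\<lambda>xs. if P xs then 1 else 0)"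

lemma tc_if: "tcp n P \<Longrightarrow> tc n A \<Longrightarrow> tc n B \<Longrightarrow> tc n (\<lambda>xs. if P xs then A xs else B xs)"
  unfolding tcp_def
  by (drule (2) tc_app3'[OF tc_cond3]) (erule tc_cong, auto)

lemma tcp_eq: "tc n A \<Longrightarrow> tc n B \<Longrightarrow> tcp n (\<lambda>xs. A xs = B xs)"
  unfolding tcp_def
proof -
  assume a: "tc n A" "tc n B"
  have "tc n (\<lambda>xs. 1 - ((A xs - B xs) + (B xs - A xs)))" by (intro tc_minus tc_plus tc_const a)
  then show "tc n (\<lambda>xs. if A xs = B xs then 1 else 0)" by (rule tc_cong) auto
qed

lemma tcp_less: "tc n A \<Longrightarrow> tc n B \<Longrightarrow> tcp n (\<lambda>xs. A xs < B xs)"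
  unfolding tcp_def
proof -
  assume a: "tc n A" "tc n B"
  have "tc n (\<lambda>xs. 1 - (1 - (B xs - A xs)))" by (intro tc_minus tc_const a)
  then show "tc n (\<lambda>xs. if A xs < B xs then 1 else 0)" by (rule tc_cong) auto
qed

lemma tcp_not: "tcp n P \<Longrightarrow> tcp n (\<lambda>xs. \<not> P xs)"
  unfolding tcp_def
proof -
  assume a: "tc n (\<lambda>xs. if P xs then 1 else 0)"
  have "tc n (\<lambda>xs. 1 - (if P xs then 1 else (0::nat)))" by (rule tc_minus[OF tc_const a])
  then show "tc n (\<lambda>xs. if \<not> P xs then 1 else 0)" by (rule tc_cong) auto
qed

lemma tcp_conj: "tcp n P \<Longrightarrow> tcp n Q \<Longrightarrow> tcp n (\<lambda>xs. P xs \<and> Q xs)"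
  unfolding tcp_def
proof -
  assume a: "tc n (\<lambda>xs. if P xs then 1 else 0)" "tc n (\<lambda>xs. if Q xs then 1 else 0)"
  have "tc n (\<lambda>xs. (if P xs then 1 else 0) * (if Q xs then 1 else (0::nat)))" by (rule tc_times[OF a])
  then show "tc n (\<lambda>xs. if P xs \<and> Q xs then 1 else 0)" by (rule tc_cong) auto
qed

lemma tcp_disj: "tcp n P \<Longrightarrow> tcp n Q \<Longrightarrow> tcp n (\<lambda>xs. P xs \<or> Q xs)"
  using tcp_not[OF tcp_conj[OF tcp_not tcp_not], of n P Q] by simp

lemma tcp_imp: "tcp n P \<Longrightarrow> tcp n Q \<Longrightarrow> tcp n (\<lambda>xs. P xs \<longrightarrow> Q xs)"
  using tcp_disj[OF tcp_not, of n P Q] by simp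

lemma tcp_le: "tc n A \<Longrightarrow> tc n B \<Longrightarrow> tcp n (\<lambda>xs. A xs \<le> B xs)"
  using tcp_not[OF tcp_less, of n B A] by (simp add: not_less)

lemma tcp_const: "tcp n (\<lambda>xs. b)"
  unfolding tcp_def by (cases b) (auto intro: tc_const)

lemma tcp_neq: "tc n A \<Longrightarrow> tc n B \<Longrightarrow> tcp n (\<lambda>xs. A xs \<noteq> B xs)"
  by (rule tcp_not[OF tcp_eq])

lemma tc_mu:
  assumes "tcp (Suc n) P" and "\<And>xs. length xs = n \<Longrightarrow> \<exists>k. P (k # xs)"
  shows "tc n (\<lambda>xs. LEAST k. P (k # xs))"
proof -
  have "tc (Suc n) (\<lambda>xs. 1 - (if P xs then 1 else 0))"
    using assms(1) unfolding tcp_def by (intro tc_minus tc_const)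
  then have "tc n (\<lambda>xs. LEAST k. 1 - (if P (k # xs) then 1 else 0) = (0::nat))"
    by (rule tc_mn) (use assms(2) in auto)
  then show ?thesis by (rule tc_cong) auto
qed

lemma pc_mu:
  assumes "tcp (Suc n) P"
  shows "pc n (\<lambda>xs. if \<exists>k. P (k # xs) then Some (LEAST k. P (k # xs)) else None)"
proof -
  have "tc (Suc n) (\<lambda>xs. 1 - (if P xs then 1 else 0))"
    using assms(1) unfolding tcp_def by (intro tc_minus tc_const)
  then have "pc n (\<lambda>xs. if \<exists>k. 1 - (if P (k # xs) then 1 else 0) = (0::nat) then Some (LEAST k. 1 - (if P (k # xs) then 1 else 0) = (0::nat)) else None)"
    by (rule pc_mn)
  then show ?thesis by (rule pc_cong) auto
qed

lemma tc_fun: "computable h \<Longrightarrow> tc n A \<Longrightarrow> tc n (\<lambda>xs. h (A xs))"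
proof -
  assume "computable h" "tc n A"
  then obtain e where e: "\<forall>x y. eval e [x] y \<longleftrightarrow> Some (h x) = Some y"
    unfolding computable_def partial_computable_def by blast
  have "tc 1 (\<lambda>ys. h (ys ! 0))" unfolding tc_def
    by (rule exI[of _ e]) (use e in \<open>auto simp: length_Suc_conv\<close>)
  then show ?thesis by (rule tc_app1') fact
qed

lemma tc_funpow: "computable h \<Longrightarrow> tc n K \<Longrightarrow> tc n A \<Longrightarrow> tc n (\<lambda>xs. (h ^^ K xs) (A xs))"
proof -
  assume h: "computable h" and K: "tc n K" and A: "tc n A"
  have T: "tc n (\<lambda>xs. rec_iter A (\<lambda>ys. h (ys ! 1)) (K xs) xs)"
    by (rule tc_iter[OF A _ K]) (auto intro: tc_fun[OF h] tc_proj)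
  have E: "rec_iter A (\<lambda>ys. h (ys ! 1)) k xs = (h ^^ k) (A xs)" for k xs
    by (induction k) auto
  show ?thesis by (rule tc_cong[OF T]; subst E; auto simp:)
qed

lemma tc_tri1: "tc 1 (\<lambda>ys. triangle (ys ! 0))"
proof -
  have T: "tc 1 (\<lambda>ys. rec_iter (\<lambda>xs. 0) (\<lambda>ys. ys ! 1 + Suc (ys ! 0)) (ys ! 0) (tl ys))"
    by (rule tc_pr2[where n=0]; (intro tc_proj tc_const tc_plus tc_Suc)?; simp)
  have E: "rec_iter (\<lambda>xs. 0) (\<lambda>ys. ys ! 1 + Suc (ys ! 0)) k xs = triangle k" for k xs
    by (induction k) auto
  show ?thesis by (rule tc_cong[OF T]; subst E; auto simp:)
qed

lemma tc_tri: "tc n A \<Longrightarrow> tc n (\<lambda>xs. triangle (A xs))"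
  by (rule tc_app1'[OF tc_tri1])

lemma tc_pe: assumes "tc n A" "tc n B" shows "tc n (\<lambda>xs. prod_encode (A xs, B xs))"
  unfolding prod_encode_def by (simp, intro tc_plus tc_tri assms)

definition sdiag :: "nat \<Rightarrow> nat" where "sdiag z = (LEAST s. z < triangle (Suc s))"

lemma triangle_mono: "a \<le> b \<Longrightarrow> triangle a \<le> triangle b"
  by (induction b) (auto simp: le_Suc_eq)

lemma sdiag_pe: "sdiag (prod_encode (m, k)) = m + k"
  unfolding sdiag_def
proof (rule Least_equality)
  show "prod_encode (m, k) < triangle (Suc (m + k))" by (simp add: prod_encode_def)
next
  fix y assume y: "prod_encode (m, k) < triangle (Suc y)"
  show "m + k \<le> y"
  proof (rule ccontr)
    assume "\<not> m + k \<le> y"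
    then have "Suc y \<le> m + k" by simp
    then have "triangle (Suc y) \<le> triangle (m + k)" by (rule triangle_mono)
    then show False using y by (simp add: prod_encode_def)
  qed
qed

lemma fst_pd: "fst (prod_decode z) = z - triangle (sdiag z)"
proof -
  obtain m k where mk: "prod_decode z = (m, k)" by (cases "prod_decode z")
  then have z: "z = prod_encode (m, k)" by (metis prod_decode_inverse)
  show ?thesis unfolding z by (simp only: sdiag_pe prod_encode_inverse) (simp add: prod_encode_def)
qed

lemma snd_pd: "snd (prod_decode z) = sdiag z - fst (prod_decode z)"
proof -
  obtain m k where mk: "prod_decode z = (m, k)" by (cases "prod_decode z")
  then have z: "z = prod_encode (m, k)" by (metis prod_decode_inverse)
  show ?thesis unfolding z by (simp add: sdiag_pe)
qed

lemma tc_sdiag: assumes A: "tc n A" shows "tc n (\<lambda>xs. sdiag (A xs))"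
proof -
  have "tc 1 (\<lambda>xs. LEAST k. (\<lambda>ys. ys ! 1 < triangle (Suc (ys ! 0))) (k # xs))"
  proof (rule tc_mu)
    show "tcp (Suc 1) (\<lambda>ys. ys ! 1 < triangle (Suc (ys ! 0)))"
      by (intro tcp_less tc_tri tc_Suc tc_proj) auto
    fix xs :: "nat list"
    show "\<exists>k. (\<lambda>ys. ys ! 1 < triangle (Suc (ys ! 0))) (k # xs)"
      by (rule exI[of _ "xs ! 0"]) simp
  qed
  then have "tc 1 (\<lambda>ys. sdiag (ys ! 0))" by (rule tc_cong) (simp add: sdiag_def)
  then show ?thesis by (rule tc_app1') fact
qed

lemma tc_fst: assumes "tc n A" shows "tc n (\<lambda>xs. fst (prod_decode (A xs)))"
  unfolding fst_pd by (intro tc_minus tc_tri tc_sdiag assms)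

lemma tc_snd: assumes "tc n A" shows "tc n (\<lambda>xs. snd (prod_decode (A xs)))"
  unfolding snd_pd fst_pd by (intro tc_minus tc_tri tc_sdiag assms)

lemma tc_funpow1: assumes h: "tc 1 (\<lambda>ys. h (ys ! 0))" and K: "tc n K" and A: "tc n A"
  shows "tc n (\<lambda>xs. (h ^^ K xs) (A xs))"
proof -
  have T: "tc n (\<lambda>xs. rec_iter A (\<lambda>ys. h (ys ! 1)) (K xs) xs)"
    by (rule tc_iter[OF A _ K]) (rule tc_app1'[OF h], rule tc_proj, simp)
  have E: "rec_iter A (\<lambda>ys. h (ys ! 1)) k xs = (h ^^ k) (A xs)" for k xs
    by (induction k) auto
  show ?thesis by (rule tc_cong[OF T]; subst E; simp)
qed

lemma tc_min: assumes "tc n A" "tc n B" shows "tc n (\<lambda>xs. min (A xs) (B xs))"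
  unfolding min_def by (intro tc_if tcp_le assms)

lemma tc_max: assumes "tc n A" "tc n B" shows "tc n (\<lambda>xs. max (A xs) (B xs))"
  unfolding max_def by (intro tc_if tcp_le assms)

lemma pc_compt:
  assumes H: "pc m H" and len: "length Gs = m" and G: "\<forall>G\<in>set Gs. tc n G"
  shows "pc n (\<lambda>xs. H (map (\<lambda>G. G xs) Gs))"
proof -
  obtain eh where eh: "\<forall>xs. length xs = m \<longrightarrow> (\<forall>y. eval eh xs y \<longleftrightarrow> H xs = Some y)" using H unfolding pc_def by blast
  define es where "es = map (\<lambda>G. SOME e. \<forall>xs. length xs = n \<longrightarrow> (\<forall>y. eval e xs y \<longleftrightarrow> y = G xs)) Gs"
  have es: "\<forall>i<length Gs. \<forall>xs. length xs = n \<longrightarrow> (\<forall>y. eval (es ! i) xs y \<longleftrightarrow> y = (Gs ! i) xs)"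
  proof (intro allI impI)
    fix i y and xs :: "nat list" assume i: "i < length Gs" and xs: "length xs = n"
    have "\<exists>e. \<forall>xs. length xs = n \<longrightarrow> (\<forall>y. eval e xs y \<longleftrightarrow> y = (Gs ! i) xs)" using G i tc_prog by auto
    then have "\<forall>xs. length xs = n \<longrightarrow> (\<forall>y. eval (SOME e. \<forall>xs. length xs = n \<longrightarrow> (\<forall>y. eval e xs y \<longleftrightarrow> y = (Gs ! i) xs)) xs y \<longleftrightarrow> y = (Gs ! i) xs)"
      by (rule someI_ex)
    then show "eval (es ! i) xs y \<longleftrightarrow> y = (Gs ! i) xs" using i xs unfolding es_def by auto
  qed
  have ys: "list_all2 (\<lambda>g y. eval g xs y) es ys \<longleftrightarrow> ys = map (\<lambda>G. G xs) Gs" if xs: "length xs = n" for xs ys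
  proof
    have le: "length es = length Gs" unfolding es_def by simp
    assume "list_all2 (\<lambda>g y. eval g xs y) es ys"
    then have "length ys = length Gs" "\<forall>i<length Gs. eval (es ! i) xs (ys ! i)"
      using le by (auto simp: list_all2_conv_all_nth)
    then show "ys = map (\<lambda>G. G xs) Gs" using es xs by (intro nth_equalityI) auto
  next
    have le: "length es = length Gs" unfolding es_def by simp
    assume "ys = map (\<lambda>G. G xs) Gs"
    then show "list_all2 (\<lambda>g y. eval g xs y) es ys" using es xs le by (auto simp: list_all2_conv_all_nth)
  qed
  show ?thesis unfolding pc_def
  proof (intro exI[of _ "Cn eh es"] allI impI)
    fix y and xs :: "nat list" assume xs: "length xs = n"
    show "eval (Cn eh es) xs y = (H (map (\<lambda>G. G xs) Gs) = Some y)"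
    proof
      assume "eval (Cn eh es) xs y"
      then show "H (map (\<lambda>G. G xs) Gs) = Some y"
        by (cases rule: eval.cases) (use ys[OF xs] eh len in auto)
    next
      assume "H (map (\<lambda>G. G xs) Gs) = Some y"
      then show "eval (Cn eh es) xs y"
        using ys[OF xs] eh len by (auto intro!: eval_Cn[where ys = "map (\<lambda>G. G xs) Gs"])
    qed
  qed
qed

lemma pc_bind:
  assumes A: "pc n A" and B: "pc (Suc n) B"
  shows "pc n (\<lambda>xs. case A xs of None \<Rightarrow> None | Some y \<Rightarrow> B (y # xs))"
proof -
  obtain ea where ea: "\<forall>xs. length xs = n \<longrightarrow> (\<forall>y. eval ea xs y \<longleftrightarrow> A xs = Some y)" using A unfolding pc_def by blast
  obtain eb where eb: "\<forall>xs. length xs = Suc n \<longrightarrow> (\<forall>y. eval eb xs y \<longleftrightarrow> B xs = Some y)" using B unfolding pc_def by blast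
  show ?thesis unfolding pc_def
  proof (intro exI[of _ "Cn eb (ea # map Id [0..<n])"] allI impI)
    fix z and xs :: "nat list" assume xs: "length xs = n"
    show "eval (Cn eb (ea # map Id [0..<n])) xs z = ((case A xs of None \<Rightarrow> None | Some y \<Rightarrow> B (y # xs)) = Some z)"
    proof
      assume "eval (Cn eb (ea # map Id [0..<n])) xs z"
      then obtain ys where "list_all2 (\<lambda>g y. eval g xs y) (ea # map Id [0..<n]) ys" "eval eb ys z"
        by (cases rule: eval.cases) auto
      then obtain y ys' where "ys = y # ys'" "eval ea xs y" "list_all2 (\<lambda>g y. eval g xs y) (map Id [0..<n]) ys'" "eval eb ys z"
        by (auto simp: list_all2_Cons1)
      moreover have "ys' = xs" using eval_ids_inv[OF xs] \<open>list_all2 (\<lambda>g y. eval g xs y) (map Id [0..<n]) ys'\<close> by auto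
      ultimately show "(case A xs of None \<Rightarrow> None | Some y \<Rightarrow> B (y # xs)) = Some z"
        using ea eb xs by auto
    next
      assume "(case A xs of None \<Rightarrow> None | Some y \<Rightarrow> B (y # xs)) = Some z"
      then obtain y where y: "A xs = Some y" "B (y # xs) = Some z" by (auto split: option.splits)
      show "eval (Cn eb (ea # map Id [0..<n])) xs z"
        apply (rule eval_Cn[where ys = "y # xs"])
        using y ea eb xs eval_ids[OF xs] by auto
    qed
  qed
qed

lemmas tc_rules = tc_const tc_proj tc_Suc tc_plus tc_minus tc_times tc_if tc_pe tc_fst tc_snd tc_tri tc_min tc_max
  tcp_eq tcp_neq tcp_less tcp_le tcp_not tcp_conj tcp_disj tcp_imp tcp_const


definition pre1 :: "(nat \<Rightarrow> nat) \<Rightarrow> nat \<Rightarrow> nat" where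
  "pre1 f x = (LEAST y. f y = x)"

definition pre2 :: "(nat \<Rightarrow> nat) \<Rightarrow> nat \<Rightarrow> nat" where
  "pre2 f x = (LEAST y. (branching f x = 2 \<and> f y = x \<and> y \<noteq> pre1 f x) \<or> (branching f x \<noteq> 2 \<and> y = pre1 f x))"

lemma br_cases:
  assumes "is_21_1 f"
  shows "(branching f x = 1 \<and> (\<exists>a. f -` {x} = {a})) \<or> (branching f x = 2 \<and> (\<exists>a b. a \<noteq> b \<and> f -` {x} = {a, b}))"
proof -
  have "card (f -` {x}) \<in> {1, 2}" using assms unfolding is_21_1_def by auto
  then show ?thesis unfolding branching_def
    by (auto simp: card_1_singleton_iff card_2_iff)
qed

lemma branching_12: "is_21_1 f \<Longrightarrow> branching f x = 1 \<or> branching f x = 2"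
  using br_cases by blast

lemma pre1_ex: "is_21_1 f \<Longrightarrow> \<exists>y. f y = x"
  using br_cases[of f x] by (metis insertI1 vimage_singleton_eq)

lemma f_pre1: "is_21_1 f \<Longrightarrow> f (pre1 f x) = x"
  unfolding pre1_def using pre1_ex by (rule LeastI_ex)

lemma pre2_ex: "is_21_1 f \<Longrightarrow> \<exists>y. (branching f x = 2 \<and> f y = x \<and> y \<noteq> pre1 f x) \<or> (branching f x \<noteq> 2 \<and> y = pre1 f x)"
proof -
  assume f: "is_21_1 f"
  show ?thesis
  proof (cases "branching f x = 2")
    case True
    then obtain a b where ab: "a \<noteq> b" "f -` {x} = {a, b}" using br_cases[OF f, of x] by auto
    have "f a = x" "f b = x" using ab by auto
    then show ?thesis using True ab(1) by (metis)
  qed auto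
qed

lemma pre2_prop: "is_21_1 f \<Longrightarrow> (branching f x = 2 \<and> f (pre2 f x) = x \<and> pre2 f x \<noteq> pre1 f x) \<or> (branching f x \<noteq> 2 \<and> pre2 f x = pre1 f x)"
  unfolding pre2_def by (rule LeastI_ex) (rule pre2_ex)

lemma f_pre2: "is_21_1 f \<Longrightarrow> f (pre2 f x) = x"
  using pre2_prop[of f x] f_pre1[of f x] by auto

lemma pre2_eq1: "is_21_1 f \<Longrightarrow> branching f x \<noteq> 2 \<Longrightarrow> pre2 f x = pre1 f x"
  using pre2_prop by blast

lemma pre2_neq: "is_21_1 f \<Longrightarrow> branching f x = 2 \<Longrightarrow> pre2 f x \<noteq> pre1 f x"
  using pre2_prop by blast

lemma preimage_eq: "is_21_1 f \<Longrightarrow> f -` {x} = {pre1 f x, pre2 f x}"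
proof -
  assume f: "is_21_1 f"
  have p1: "pre1 f x \<in> f -` {x}" "pre2 f x \<in> f -` {x}" using f_pre1[OF f] f_pre2[OF f] by auto
  from br_cases[OF f, of x] show ?thesis
  proof
    assume "branching f x = 1 \<and> (\<exists>a. f -` {x} = {a})"
    then obtain a where a: "f -` {x} = {a}" by auto
    with p1 have "pre1 f x = a" "pre2 f x = a" by auto
    then show ?thesis using a by simp
  next
    assume a: "branching f x = 2 \<and> (\<exists>a b. a \<noteq> b \<and> f -` {x} = {a, b})"
    then have ne: "pre2 f x \<noteq> pre1 f x" using pre2_neq[OF f] by auto
    from a obtain a' b' where ab: "a' \<noteq> b'" "f -` {x} = {a', b'}" by auto
    have "{pre1 f x, pre2 f x} = f -` {x}"
      by (rule card_seteq) (use ab ne p1 in auto)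
    then show ?thesis by simp
  qed
qed

lemma preimage_iff: "is_21_1 f \<Longrightarrow> f y = x \<longleftrightarrow> y = pre1 f x \<or> y = pre2 f x"
  using preimage_eq[of f x] by auto

fun code :: "(nat \<Rightarrow> nat) \<Rightarrow> nat \<Rightarrow> nat \<Rightarrow> nat" where
  "code f x 0 = 0"
| "code f x (Suc n) = Suc (prod_encode (branching f x,
      prod_encode (min (code f (pre1 f x) n) (code f (pre2 f x) n), max (code f (pre1 f x) n) (code f (pre2 f x) n))))"

definition Eq :: "(nat \<Rightarrow> nat) \<Rightarrow> (nat \<Rightarrow> nat) \<Rightarrow> nat \<Rightarrow> nat \<Rightarrow> bool" where
  "Eq f g x y \<longleftrightarrow> (\<forall>n. code f x n = code g y n)"

lemma minmax_eq: "(min (a::nat) b = min c d \<and> max a b = max c d) \<longleftrightarrow> (a = c \<and> b = d) \<or> (a = d \<and> b = c)"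
  by (auto simp: min_def max_def)

lemma code_Suc_eq: "code f x (Suc n) = code g y (Suc n) \<longleftrightarrow> branching f x = branching g y \<and>
   ((code f (pre1 f x) n = code g (pre1 g y) n \<and> code f (pre2 f x) n = code g (pre2 g y) n) \<or>
    (code f (pre1 f x) n = code g (pre2 g y) n \<and> code f (pre2 f x) n = code g (pre1 g y) n))"
  by (simp add: minmax_eq[symmetric])

lemma code_mono: "code f x (Suc n) = code g y (Suc n) \<Longrightarrow> code f x n = code g y n"
proof (induction n arbitrary: x y)
  case 0 then show ?case by simp
next
  case (Suc n)
  then show ?case unfolding code_Suc_eq[of f x "Suc n"] code_Suc_eq[of f x n] by blast
qed

lemma code_mono': "m \<le> n \<Longrightarrow> code f x n = code g y n \<Longrightarrow> code f x m = code g y m"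
proof (induction n rule: dec_induct)
  case base then show ?case .
next
  case (step k) then show ?case using code_mono by blast
qed

lemma Eq_branching: "Eq f g x y \<Longrightarrow> branching f x = branching g y"
proof -
  assume "Eq f g x y"
  then have "code f x (Suc 0) = code g y (Suc 0)" unfolding Eq_def by blast
  then show ?thesis by (simp only: code_Suc_eq)
qed

lemma Eq_trans: "Eq f g x y \<Longrightarrow> Eq g h y z \<Longrightarrow> Eq f h x z"
  unfolding Eq_def by auto

lemma Eq_sym: "Eq f g x y \<Longrightarrow> Eq g f y x"
  unfolding Eq_def by auto

lemma Eq_children:
  assumes E: "Eq f g x y"
  shows "(Eq f g (pre1 f x) (pre1 g y) \<and> Eq f g (pre2 f x) (pre2 g y)) \<or>
         (Eq f g (pre1 f x) (pre2 g y) \<and> Eq f g (pre2 f x) (pre1 g y))"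
proof -
  let ?a = "code f (pre1 f x)" and ?b = "code f (pre2 f x)" and ?c = "code g (pre1 g y)" and ?d = "code g (pre2 g y)"
  have step: "(?a n = ?c n \<and> ?b n = ?d n) \<or> (?a n = ?d n \<and> ?b n = ?c n)" for n
  proof -
    have "code f x (Suc n) = code g y (Suc n)" using E unfolding Eq_def by blast
    then show ?thesis by (simp only: code_Suc_eq)
  qed
  show ?thesis
  proof (cases "\<forall>n. ?a n = ?c n")
    case True
    then have "\<forall>n. ?b n = ?d n" using step by metis
    then show ?thesis using True unfolding Eq_def by auto
  next
    case False
    then obtain N where N: "?a N \<noteq> ?c N" by auto
    have ad: "?a n = ?d n" for n
    proof -
      have "?a (max n N) \<noteq> ?c (max n N)"
        using N code_mono'[of N "max n N" f "pre1 f x" g "pre1 g y"] by (metis max.cobounded2)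
      then have "?a (max n N) = ?d (max n N)" using step by blast
      then show ?thesis using code_mono' by (metis max.cobounded1)
    qed
    then have "?b n = ?c n" for n using step by metis
    then show ?thesis using ad unfolding Eq_def by auto
  qed
qed

lemma doubleton_cases: "{a, b} = {c, d} \<Longrightarrow> (a = c \<and> b = d) \<or> (a = d \<and> b = c)"
  by (auto simp: doubleton_eq_iff)

lemma tree_pre: "a \<in> tree f x \<Longrightarrow> f c = a \<Longrightarrow> c \<in> tree f x"
proof -
  assume a: "a \<in> tree f x" and c: "f c = a"
  then obtain n where "(f ^^ n) a = x" unfolding tree_def by auto
  moreover have "(f ^^ Suc n) c = (f ^^ n) (f c)" by (simp add: funpow_swap1)
  ultimately have "(f ^^ Suc n) c = x" using c by simp
  then show ?thesis unfolding tree_def by blast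
qed

lemma tree_root: "x \<in> tree f x"
  unfolding tree_def by (auto intro: exI[of _ 0])

lemma Tree_iso_Eq:
  assumes f: "is_21_1 f" and g: "is_21_1 g" and h: "Tree_iso f x g y h"
  shows "a \<in> tree f x \<Longrightarrow> Eq f g a (h a)"
proof -
  have bij: "bij_betw h (tree f x) (tree g y)" and edge: "\<forall>a\<in>tree f x. \<forall>b\<in>tree f x. f a = b \<longleftrightarrow> g (h a) = h b"
    using h unfolding Tree_iso_def digraph_iso_def tree_edge_def by auto
  have img: "h ` (f -` {a}) = g -` {h a}" and inj: "inj_on h (f -` {a})" if a: "a \<in> tree f x" for a
  proof -
    have sub: "f -` {a} \<subseteq> tree f x" using a tree_pre by blast
    show "inj_on h (f -` {a})" using bij sub unfolding bij_betw_def by (metis inj_on_subset)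
    show "h ` (f -` {a}) = g -` {h a}"
    proof
      show "h ` (f -` {a}) \<subseteq> g -` {h a}" using sub edge a by auto
    next
      show "g -` {h a} \<subseteq> h ` (f -` {a})"
      proof
        fix b assume b: "b \<in> g -` {h a}"
        have ha: "h a \<in> tree g y" using bij a by (auto simp: bij_betw_def)
        then have "b \<in> tree g y" using b tree_pre by blast
        then obtain c where c: "c \<in> tree f x" "h c = b" using bij by (metis bij_betw_def imageE)
        then have "f c = a" using edge a b by auto
        then show "b \<in> h ` (f -` {a})" using c by auto
      qed
    qed
  qed
  have "\<forall>a\<in>tree f x. code f a n = code g (h a) n" for n
  proof (induction n)
    case 0 then show ?case by simp
  next
    case (Suc n)
    show ?case
    proof
      fix a assume a: "a \<in> tree f x"
      have br: "branching f a = branching g (h a)"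
        unfolding branching_def using card_image[OF inj[OF a]] img[OF a] by simp
      have "{h (pre1 f a), h (pre2 f a)} = {pre1 g (h a), pre2 g (h a)}"
        using img[OF a] preimage_eq[OF f, of a] preimage_eq[OF g, of "h a"] by auto
      then have cs: "(h (pre1 f a) = pre1 g (h a) \<and> h (pre2 f a) = pre2 g (h a)) \<or>
                     (h (pre1 f a) = pre2 g (h a) \<and> h (pre2 f a) = pre1 g (h a))"
        by (rule doubleton_cases)
      have t: "pre1 f a \<in> tree f x" "pre2 f a \<in> tree f x"
        using a tree_pre f_pre1[OF f] f_pre2[OF f] by blast+
      show "code f a (Suc n) = code g (h a) (Suc n)"
        unfolding code_Suc_eq using cs br Suc.IH t by auto
    qed
  qed
  then show "a \<in> tree f x \<Longrightarrow> Eq f g a (h a)" unfolding Eq_def by auto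
qed

lemma funpow_swap': "(f ^^ m) ((f ^^ n) x) = (f ^^ n) ((f ^^ m) x)"
  by (metis add.commute funpow_add comp_apply)

lemma noncyc_below: "\<not> cyclic f x \<Longrightarrow> (f ^^ n) y = x \<Longrightarrow> \<not> cyclic f y"
  unfolding cyclic_def by (metis funpow_swap')

lemma depth_unique_lt: "\<not> cyclic f x \<Longrightarrow> (f ^^ n) a = x \<Longrightarrow> (f ^^ m) a = x \<Longrightarrow> n < m \<Longrightarrow> False"
proof -
  assume nc: "\<not> cyclic f x" and n: "(f ^^ n) a = x" and m: "(f ^^ m) a = x" and lt: "n < m"
  have "(f ^^ (m - n)) x = x" using n m lt by (metis funpow_add le_add_diff_inverse2 less_imp_le comp_apply)
  then show False using nc lt unfolding cyclic_def by (metis zero_less_diff)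
qed

lemma depth_unique: "\<not> cyclic f x \<Longrightarrow> (f ^^ n) a = x \<Longrightarrow> (f ^^ m) a = x \<Longrightarrow> n = m"
  by (metis depth_unique_lt linorder_neqE_nat)

definition depth :: "(nat \<Rightarrow> nat) \<Rightarrow> nat \<Rightarrow> nat \<Rightarrow> nat" where
  "depth f x a = (LEAST n. (f ^^ n) a = x)"

lemma depth_eq: "\<not> cyclic f x \<Longrightarrow> (f ^^ n) a = x \<Longrightarrow> depth f x a = n"
  unfolding depth_def by (rule Least_equality) (auto dest: depth_unique)

lemma depth_tree: "a \<in> tree f x \<Longrightarrow> (f ^^ depth f x a) a = x"
  unfolding depth_def tree_def by (auto intro: LeastI_ex)

lemma depth_root: "\<not> cyclic f x \<Longrightarrow> depth f x x = 0"
  by (rule depth_eq) auto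

lemma depth_Suc:
  assumes nc: "\<not> cyclic f x" and a: "a \<in> tree f x" and ne: "a \<noteq> x"
  shows "f a \<in> tree f x \<and> depth f x a = Suc (depth f x (f a))"
proof -
  obtain d where d: "depth f x a = Suc d" using depth_tree[OF a] ne by (cases "depth f x a") auto
  then have "(f ^^ d) (f a) = x" using depth_tree[OF a] by (simp add: funpow_swap1)
  then show ?thesis using d depth_eq[OF nc] unfolding tree_def by auto
qed

lemma root_f_notin: "\<not> cyclic f x \<Longrightarrow> f x \<notin> tree f x"
proof
  assume nc: "\<not> cyclic f x" and "f x \<in> tree f x"
  then obtain n where "(f ^^ n) (f x) = x" unfolding tree_def by auto
  then have "(f ^^ Suc n) x = x" by (simp add: funpow_swap1)
  then show False using nc unfolding cyclic_def by blast
qed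

definition Ms :: "(nat \<Rightarrow> nat) \<Rightarrow> (nat \<Rightarrow> nat) \<Rightarrow> (nat \<Rightarrow> nat \<Rightarrow> bool) \<Rightarrow> nat \<Rightarrow> nat \<Rightarrow> nat \<Rightarrow> nat" where
  "Ms f g s p q ch = (if ch = pre1 f p then (if s p q then pre1 g q else pre2 g q) else (if s p q then pre2 g q else pre1 g q))"

lemma M_good:
  assumes f: "is_21_1 f" and g: "is_21_1 g" and E: "Eq f g p q"
    and sok: "branching f p = 2 \<Longrightarrow> (s p q \<longleftrightarrow> Eq f g (pre1 f p) (pre1 g q))"
  shows "(\<forall>ch. f ch = p \<longrightarrow> g (Ms f g s p q ch) = q \<and> Eq f g ch (Ms f g s p q ch))
     \<and> inj_on (Ms f g s p q) (f -` {p}) \<and> g -` {q} \<subseteq> Ms f g s p q ` (f -` {p})"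
proof -
  have br: "branching f p = branching g q" by (rule Eq_branching[OF E])
  have ch: "(Eq f g (pre1 f p) (pre1 g q) \<and> Eq f g (pre2 f p) (pre2 g q)) \<or>
         (Eq f g (pre1 f p) (pre2 g q) \<and> Eq f g (pre2 f p) (pre1 g q))" by (rule Eq_children[OF E])
  show ?thesis
  proof (cases "branching f p = 2")
    case False
    then have e: "pre2 f p = pre1 f p" "pre2 g q = pre1 g q" using pre2_eq1 f g br by auto
    then have E1: "Eq f g (pre1 f p) (pre1 g q)" using ch by auto
    have pf: "f -` {p} = {pre1 f p}" and pg: "g -` {q} = {pre1 g q}"
      using preimage_eq[OF f, of p] preimage_eq[OF g, of q] e by auto
    have "Ms f g s p q (pre1 f p) = pre1 g q" unfolding Ms_def using e by auto
    moreover have "\<forall>ch. f ch = p \<longrightarrow> ch = pre1 f p" using pf by auto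
    ultimately show ?thesis using pf pg E1 f_pre1[OF g] by auto
  next
    case True
    then have ne: "pre2 f p \<noteq> pre1 f p" "pre2 g q \<noteq> pre1 g q" using pre2_neq f g br by auto
    have pf: "f -` {p} = {pre1 f p, pre2 f p}" and pg: "g -` {q} = {pre1 g q, pre2 g q}"
      using preimage_eq[OF f, of p] preimage_eq[OF g, of q] by auto
    have A: "\<And>ch. f ch = p \<Longrightarrow> ch = pre1 f p \<or> ch = pre2 f p" using pf by auto
    show ?thesis
    proof (cases "s p q")
      case s: True
      then have E1: "Eq f g (pre1 f p) (pre1 g q)" using sok True by auto
      have E2: "Eq f g (pre2 f p) (pre2 g q)"
        using ch E1 by (meson Eq_sym Eq_trans)
      have m: "Ms f g s p q (pre1 f p) = pre1 g q" "Ms f g s p q (pre2 f p) = pre2 g q"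
        unfolding Ms_def using s ne by auto
      show ?thesis
      proof (intro conjI allI impI)
        fix ch assume "f ch = p"
        then have "ch = pre1 f p \<or> ch = pre2 f p" by (rule A)
        then show "g (Ms f g s p q ch) = q" using m f_pre1[OF g] f_pre2[OF g] by auto
      next
        fix ch assume "f ch = p"
        then have "ch = pre1 f p \<or> ch = pre2 f p" by (rule A)
        then show "Eq f g ch (Ms f g s p q ch)" using m E1 E2 by auto
      next
        show "inj_on (Ms f g s p q) (f -` {p})" using m pf ne by (auto simp: inj_on_def)
      next
        show "g -` {q} \<subseteq> Ms f g s p q ` (f -` {p})" using m pf pg by auto
      qed
    next
      case s: False
      then have "\<not> Eq f g (pre1 f p) (pre1 g q)" using sok True by auto
      then have E1: "Eq f g (pre1 f p) (pre2 g q)" "Eq f g (pre2 f p) (pre1 g q)" using ch by auto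
      have m: "Ms f g s p q (pre1 f p) = pre2 g q" "Ms f g s p q (pre2 f p) = pre1 g q"
        unfolding Ms_def using s ne by auto
      show ?thesis
      proof (intro conjI allI impI)
        fix ch assume "f ch = p"
        then have "ch = pre1 f p \<or> ch = pre2 f p" by (rule A)
        then show "g (Ms f g s p q ch) = q" using m f_pre1[OF g] f_pre2[OF g] by auto
      next
        fix ch assume "f ch = p"
        then have "ch = pre1 f p \<or> ch = pre2 f p" by (rule A)
        then show "Eq f g ch (Ms f g s p q ch)" using m E1 by auto
      next
        show "inj_on (Ms f g s p q) (f -` {p})" using m pf ne by (auto simp: inj_on_def)
      next
        show "g -` {q} \<subseteq> Ms f g s p q ` (f -` {p})" using m pf pg by auto
      qed
    qed
  qed
qed

primrec imgd :: "(nat \<Rightarrow> nat) \<Rightarrow> (nat \<Rightarrow> nat \<Rightarrow> nat \<Rightarrow> nat) \<Rightarrow> nat \<Rightarrow> nat \<Rightarrow> nat \<Rightarrow> nat" where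
  "imgd f M b0 0 a = b0"
| "imgd f M b0 (Suc n) a = M (f a) (imgd f M b0 n (f a)) a"


locale constr =
  fixes f g :: "nat \<Rightarrow> nat" and a0 b0 :: nat and s :: "nat \<Rightarrow> nat \<Rightarrow> bool"
  assumes f21: "is_21_1 f" and g21: "is_21_1 g" and nca: "\<not> cyclic f a0" and ncb: "\<not> cyclic g b0"
    and E0: "Eq f g a0 b0"
    and s_ok: "\<And>p q. p \<in> tree f a0 \<Longrightarrow> q \<in> tree g b0 \<Longrightarrow> Eq f g p q \<Longrightarrow> branching f p = 2 \<Longrightarrow>
                (s p q \<longleftrightarrow> Eq f g (pre1 f p) (pre1 g q))"
begin

definition img :: "nat \<Rightarrow> nat" where
  "img a = imgd f (Ms f g s) b0 (depth f a0 a) a"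

lemma img_root: "img a0 = b0"
  unfolding img_def using depth_root[OF nca] by simp

lemma img_step: "a \<in> tree f a0 \<Longrightarrow> a \<noteq> a0 \<Longrightarrow> img a = Ms f g s (f a) (img (f a)) a"
  unfolding img_def using depth_Suc[OF nca] by simp

lemma inv: "a \<in> tree f a0 \<Longrightarrow> depth f a0 a = d \<Longrightarrow>
  img a \<in> tree g b0 \<and> depth g b0 (img a) = d \<and> Eq f g a (img a)"
proof (induction d arbitrary: a)
  case 0
  then have "a = a0" using depth_tree by fastforce
  then show ?case using img_root E0 depth_root[OF ncb] tree_root by auto
next
  case (Suc d)
  have ne: "a \<noteq> a0" using Suc.prems depth_root[OF nca] by auto
  have p: "f a \<in> tree f a0" "depth f a0 (f a) = d" using depth_Suc[OF nca Suc.prems(1) ne] Suc.prems by auto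
  let ?q = "img (f a)"
  have q: "?q \<in> tree g b0" "depth g b0 ?q = d" "Eq f g (f a) ?q" using Suc.IH[OF p] by auto
  have M: "g (Ms f g s (f a) ?q a) = ?q \<and> Eq f g a (Ms f g s (f a) ?q a)"
    using M_good[OF f21 g21 q(3), of s] s_ok[OF p(1) q(1) q(3)] by blast
  have ia: "img a = Ms f g s (f a) ?q a" by (rule img_step[OF Suc.prems(1) ne])
  have X: "(g ^^ Suc d) (img a) = b0" using M ia depth_tree[OF q(1)] q(2) by (simp add: funpow_swap1)
  have "img a \<in> tree g b0" unfolding tree_def using X by blast
  moreover have "depth g b0 (img a) = Suc d" by (rule depth_eq[OF ncb X])
  ultimately show ?case using M ia by auto
qed

lemma img_tree: "a \<in> tree f a0 \<Longrightarrow> img a \<in> tree g b0"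
  using inv by blast

lemma img_depth: "a \<in> tree f a0 \<Longrightarrow> depth g b0 (img a) = depth f a0 a"
  using inv by blast

lemma img_Eq: "a \<in> tree f a0 \<Longrightarrow> Eq f g a (img a)"
  using inv by blast

lemma img_M: "p \<in> tree f a0 \<Longrightarrow>
  (\<forall>ch. f ch = p \<longrightarrow> g (Ms f g s p (img p) ch) = img p \<and> Eq f g ch (Ms f g s p (img p) ch))
     \<and> inj_on (Ms f g s p (img p)) (f -` {p}) \<and> g -` {img p} \<subseteq> Ms f g s p (img p) ` (f -` {p})"
  using M_good[OF f21 g21 img_Eq, of p s] s_ok[OF _ img_tree img_Eq] by blast

lemma img_g: "a \<in> tree f a0 \<Longrightarrow> a \<noteq> a0 \<Longrightarrow> g (img a) = img (f a)"
  using img_step img_M depth_Suc[OF nca] by metis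

lemma img_inj_d: "a \<in> tree f a0 \<Longrightarrow> a' \<in> tree f a0 \<Longrightarrow> depth f a0 a = d \<Longrightarrow> img a = img a' \<Longrightarrow> a = a'"
proof (induction d arbitrary: a a')
  case 0
  have "depth f a0 a' = 0" using img_depth 0 by metis
  then show ?case using depth_tree[OF 0(1)] depth_tree[OF 0(2)] 0(3) by auto
next
  case (Suc d)
  have d': "depth f a0 a' = Suc d" using img_depth Suc.prems by metis
  have ne: "a \<noteq> a0" "a' \<noteq> a0" using Suc.prems d' depth_root[OF nca] by auto
  have p: "f a \<in> tree f a0" "depth f a0 (f a) = d" "f a' \<in> tree f a0"
    using depth_Suc[OF nca] Suc.prems ne by auto
  have "img (f a) = img (f a')" using img_g Suc.prems ne by metis
  then have fa: "f a = f a'" using Suc.IH[OF p(1) p(3) p(2)] by blast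
  have "Ms f g s (f a) (img (f a)) a = Ms f g s (f a) (img (f a)) a'"
    using img_step Suc.prems ne fa by metis
  then show ?case using img_M[OF p(1)] fa unfolding inj_on_def by auto
qed

lemma img_inj: "inj_on img (tree f a0)"
  unfolding inj_on_def using img_inj_d by blast

lemma img_surj_d: "b \<in> tree g b0 \<Longrightarrow> depth g b0 b = d \<Longrightarrow> \<exists>a\<in>tree f a0. img a = b"
proof (induction d arbitrary: b)
  case 0
  then have "b = b0" using depth_tree by fastforce
  then show ?case using img_root tree_root by auto
next
  case (Suc d)
  have ne: "b \<noteq> b0" using Suc.prems depth_root[OF ncb] by auto
  have q: "g b \<in> tree g b0" "depth g b0 (g b) = d" using depth_Suc[OF ncb Suc.prems(1) ne] Suc.prems by auto
  obtain p where p: "p \<in> tree f a0" "img p = g b" using Suc.IH[OF q] by blast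
  then have "b \<in> Ms f g s p (img p) ` (f -` {p})" using img_M[OF p(1)] by auto
  then obtain ch where ch: "f ch = p" "Ms f g s p (img p) ch = b" by auto
  have cht: "ch \<in> tree f a0" using tree_pre p ch by blast
  have "ch \<noteq> a0" using root_f_notin[OF nca] p ch by auto
  then have "img ch = b" using img_step[OF cht] ch by simp
  then show ?case using cht by blast
qed

lemma img_iso: "Tree_iso f a0 g b0 img"
  unfolding Tree_iso_def digraph_iso_def tree_edge_def
proof (intro conjI ballI)
  show "bij_betw img (tree f a0) (tree g b0)"
    unfolding bij_betw_def using img_inj img_tree img_surj_d by blast
next
  fix a b assume a: "a \<in> tree f a0" and b: "b \<in> tree f a0"
  show "f a = b \<longleftrightarrow> g (img a) = img b"
  proof
    assume fab: "f a = b"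
    then have "a \<noteq> a0" using root_f_notin[OF nca] b by auto
    then show "g (img a) = img b" using img_g a fab by auto
  next
    assume gab: "g (img a) = img b"
    show "f a = b"
    proof (cases "a = a0")
      case True
      then have "g b0 \<in> tree g b0" using gab img_root img_tree[OF b] by auto
      then show ?thesis using root_f_notin[OF ncb] by auto
    next
      case False
      then have "img (f a) = img b" "f a \<in> tree f a0" using img_g a gab depth_Suc[OF nca] by auto
      then show ?thesis using img_inj b unfolding inj_on_def by blast
    qed
  qed
qed

end

lemma Eq_Tree_iso:
  assumes f: "is_21_1 f" and g: "is_21_1 g" and nx: "\<not> cyclic f x" and ny: "\<not> cyclic g y" and E: "Eq f g x y"
  shows "Tree_isomorphic f x g y"
proof -
  interpret constr f g x y "\<lambda>p q. Eq f g (pre1 f p) (pre1 g q)"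
    by unfold_locales (use assms in auto)
  show ?thesis unfolding Tree_isomorphic_def using img_iso by blast
qed


definition lcons :: "nat \<Rightarrow> nat \<Rightarrow> nat" where "lcons h t = Suc (prod_encode (h, t))"
definition lhd :: "nat \<Rightarrow> nat" where "lhd z = fst (prod_decode (z - 1))"
definition ltl :: "nat \<Rightarrow> nat" where "ltl z = snd (prod_decode (z - 1))"

lemma lhd_lcons[simp]: "lhd (lcons h t) = h" and ltl_lcons[simp]: "ltl (lcons h t) = t"
  and lcons_ne[simp]: "lcons h t \<noteq> 0"
  unfolding lcons_def lhd_def ltl_def by auto

lemma tc_lcons: "tc n A \<Longrightarrow> tc n B \<Longrightarrow> tc n (\<lambda>xs. lcons (A xs) (B xs))"
  unfolding lcons_def by (intro tc_Suc tc_pe)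
lemma tc_lhd: "tc n A \<Longrightarrow> tc n (\<lambda>xs. lhd (A xs))"
  unfolding lhd_def by (intro tc_fst tc_minus tc_const)
lemma tc_ltl: "tc n A \<Longrightarrow> tc n (\<lambda>xs. ltl (A xs))"
  unfolding ltl_def by (intro tc_snd tc_minus tc_const)

definition ev :: "nat \<Rightarrow> nat \<Rightarrow> nat" where "ev x n = prod_encode (0, prod_encode (x, n))"
definition cb :: "nat \<Rightarrow> nat" where "cb x = prod_encode (1, x)"
definition cmb :: "(nat \<Rightarrow> nat) \<Rightarrow> nat \<Rightarrow> nat \<Rightarrow> nat \<Rightarrow> nat" where
  "cmb f x c1 c2 = Suc (prod_encode (branching f x, prod_encode (min c1 c2, max c1 c2)))"

definition mstep :: "(nat \<Rightarrow> nat) \<Rightarrow> nat \<Rightarrow> nat" where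
  "mstep f z = (if fst (prod_decode z) = 0 then z else
     if fst (prod_decode (lhd (fst (prod_decode z)))) = 0 then
       (if snd (prod_decode (snd (prod_decode (lhd (fst (prod_decode z)))))) = 0
        then prod_encode (ltl (fst (prod_decode z)), lcons 0 (snd (prod_decode z)))
        else prod_encode (
           lcons (ev (pre1 f (fst (prod_decode (snd (prod_decode (lhd (fst (prod_decode z))))))))
                     (snd (prod_decode (snd (prod_decode (lhd (fst (prod_decode z)))))) - 1))
            (lcons (ev (pre2 f (fst (prod_decode (snd (prod_decode (lhd (fst (prod_decode z))))))))
                     (snd (prod_decode (snd (prod_decode (lhd (fst (prod_decode z)))))) - 1))
             (lcons (cb (fst (prod_decode (snd (prod_decode (lhd (fst (prod_decode z))))))))
               (ltl (fst (prod_decode z))))),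
           snd (prod_decode z)))
     else prod_encode (ltl (fst (prod_decode z)),
            lcons (cmb f (snd (prod_decode (lhd (fst (prod_decode z)))))
                     (lhd (ltl (snd (prod_decode z)))) (lhd (snd (prod_decode z))))
                  (ltl (ltl (snd (prod_decode z))))))"

lemma mstep_fix: "fst (prod_decode z) = 0 \<Longrightarrow> (mstep f ^^ k) z = z"
  by (induction k) (auto simp: mstep_def)

lemma mstep_ev0: "mstep f (prod_encode (lcons (ev x 0) T, V)) = prod_encode (T, lcons 0 V)"
  unfolding mstep_def ev_def by simp

lemma mstep_evS: "mstep f (prod_encode (lcons (ev x (Suc n)) T, V)) =
   prod_encode (lcons (ev (pre1 f x) n) (lcons (ev (pre2 f x) n) (lcons (cb x) T)), V)"
  unfolding mstep_def ev_def by simp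

lemma mstep_cb: "mstep f (prod_encode (lcons (cb x) T, lcons c2 (lcons c1 V))) = prod_encode (T, lcons (cmb f x c1 c2) V)"
  unfolding mstep_def cb_def by simp

lemma mrun: "\<exists>m. (mstep f ^^ m) (prod_encode (lcons (ev x n) T, V)) = prod_encode (T, lcons (code f x n) V)"
proof (induction n arbitrary: x T V)
  case 0
  show ?case by (rule exI[of _ 1]) (simp add: mstep_ev0)
next
  case (Suc n)
  obtain m1 where m1: "(mstep f ^^ m1) (prod_encode (lcons (ev (pre1 f x) n) (lcons (ev (pre2 f x) n) (lcons (cb x) T)), V))
     = prod_encode (lcons (ev (pre2 f x) n) (lcons (cb x) T), lcons (code f (pre1 f x) n) V)"
    using Suc.IH by blast
  obtain m2 where m2: "(mstep f ^^ m2) (prod_encode (lcons (ev (pre2 f x) n) (lcons (cb x) T), lcons (code f (pre1 f x) n) V))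
     = prod_encode (lcons (cb x) T, lcons (code f (pre2 f x) n) (lcons (code f (pre1 f x) n) V))"
    using Suc.IH by blast
  have fa: "\<And>a b x. (mstep f ^^ (a + b)) x = (mstep f ^^ a) ((mstep f ^^ b) x)" by (simp add: funpow_add)
  have "(mstep f ^^ (Suc m2 + (m1 + Suc 0))) (prod_encode (lcons (ev x (Suc n)) T, V))
      = mstep f ((mstep f ^^ m2) ((mstep f ^^ m1) (mstep f (prod_encode (lcons (ev x (Suc n)) T, V)))))"
    by (simp only: fa funpow.simps comp_apply id_apply)
  also have "\<dots> = prod_encode (T, lcons (code f x (Suc n)) V)"
    by (simp only: mstep_evS m1 m2 mstep_cb) (simp add: cmb_def)
  finally show ?case by blast
qed

definition z0 :: "nat \<Rightarrow> nat \<Rightarrow> nat" where "z0 x n = prod_encode (lcons (ev x n) 0, 0)"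

lemma code_machine: "code f x n = lhd (snd (prod_decode ((mstep f ^^ (LEAST m. fst (prod_decode ((mstep f ^^ m) (z0 x n))) = 0)) (z0 x n))))"
proof -
  obtain m where m: "(mstep f ^^ m) (z0 x n) = prod_encode (0, lcons (code f x n) 0)"
    using mrun[of f x n 0 0] unfolding z0_def by blast
  let ?P = "\<lambda>m. fst (prod_decode ((mstep f ^^ m) (z0 x n))) = 0"
  have Pm: "?P m" using m by simp
  define m0 where "m0 = (LEAST m. ?P m)"
  have P0: "?P m0" unfolding m0_def using Pm by (rule LeastI)
  have le: "m0 \<le> m" unfolding m0_def using Pm by (rule Least_le)
  have "(mstep f ^^ m) (z0 x n) = (mstep f ^^ (m - m0)) ((mstep f ^^ m0) (z0 x n))"
    using le by (metis funpow_add le_add_diff_inverse2 comp_apply)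
  also have "\<dots> = (mstep f ^^ m0) (z0 x n)" using mstep_fix[OF P0] by simp
  finally show ?thesis using m unfolding m0_def[symmetric] by (metis lhd_lcons prod_encode_inverse snd_conv)
qed

lemma tc_pre1: assumes f: "computable f" "is_21_1 f" and A: "tc n A" shows "tc n (\<lambda>xs. pre1 f (A xs))"
proof -
  have T: "tc 1 (\<lambda>xs. LEAST k. (\<lambda>ys. f (ys ! 0) = ys ! 1) (k # xs))"
  proof (rule tc_mu)
    show "tcp (Suc 1) (\<lambda>ys. f (ys ! 0) = ys ! 1)" by (intro tcp_eq tc_fun[OF f(1)] tc_proj) auto
    fix xs :: "nat list" show "\<exists>k. (\<lambda>ys. f (ys ! 0) = ys ! 1) (k # xs)" using pre1_ex[OF f(2)] by simp
  qed
  have "tc 1 (\<lambda>ys. pre1 f (ys ! 0))" by (rule tc_cong[OF T]) (simp add: pre1_def)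
  then show ?thesis by (rule tc_app1') (rule A)
qed

lemma tc_pre2: assumes f: "computable f" "is_21_1 f" "computable (branching f)" and A: "tc n A" shows "tc n (\<lambda>xs. pre2 f (A xs))"
proof -
  let ?P = "\<lambda>ys. (branching f (ys ! 1) = 2 \<and> f (ys ! 0) = ys ! 1 \<and> ys ! 0 \<noteq> pre1 f (ys ! 1)) \<or> (branching f (ys ! 1) \<noteq> 2 \<and> ys ! 0 = pre1 f (ys ! 1))"
  have T: "tc 1 (\<lambda>xs. LEAST k. ?P (k # xs))"
  proof (rule tc_mu)
    show "tcp (Suc 1) ?P"
      by (intro tcp_disj tcp_conj tcp_eq tcp_neq tc_fun[OF f(1)] tc_fun[OF f(3)] tc_pre1[OF f(1,2)] tc_proj tc_const) auto
    fix xs :: "nat list" show "\<exists>k. ?P (k # xs)" using pre2_ex[OF f(2)] by simp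
  qed
  have "tc 1 (\<lambda>ys. pre2 f (ys ! 0))" by (rule tc_cong[OF T]) (simp add: pre2_def)
  then show ?thesis by (rule tc_app1') (rule A)
qed

lemma tc_z0: "tc n A \<Longrightarrow> tc n B \<Longrightarrow> tc n (\<lambda>xs. z0 (A xs) (B xs))"
  unfolding z0_def ev_def by (intro tc_pe tc_lcons tc_const)

lemma tc_code:
  assumes f: "computable f" "is_21_1 f" "computable (branching f)" and A: "tc n A" and B: "tc n B"
  shows "tc n (\<lambda>xs. code f (A xs) (B xs))"
proof -
  have st: "tc 1 (\<lambda>ys. mstep f (ys ! 0))"
    unfolding mstep_def ev_def cb_def cmb_def
    by (intro tc_rules tc_lcons tc_lhd tc_ltl tc_pre1[OF f(1,2)] tc_pre2[OF f] tc_fun[OF f(3)]; simp)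
  have T: "tc 2 (\<lambda>xs. LEAST m. (\<lambda>ys. fst (prod_decode ((mstep f ^^ (ys ! 0)) (z0 (ys ! 1) (ys ! 2)))) = 0) (m # xs))"
  proof (rule tc_mu)
    show "tcp (Suc 2) (\<lambda>ys. fst (prod_decode ((mstep f ^^ (ys ! 0)) (z0 (ys ! 1) (ys ! 2)))) = 0)"
      by (intro tcp_eq tc_fst tc_funpow1[OF st] tc_z0 tc_proj tc_const; simp)
    fix xs :: "nat list"
    obtain m where m: "(mstep f ^^ m) (z0 (xs ! 0) (xs ! 1)) = prod_encode (0, lcons (code f (xs ! 0) (xs ! 1)) 0)"
      using mrun[of f "xs ! 0" "xs ! 1" 0 0] unfolding z0_def by blast
    show "\<exists>m. (\<lambda>ys. fst (prod_decode ((mstep f ^^ (ys ! 0)) (z0 (ys ! 1) (ys ! 2)))) = 0) (m # xs)"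
      using m by (intro exI[of _ m]) simp
  qed
  have T': "tc 2 (\<lambda>xs. LEAST m. fst (prod_decode ((mstep f ^^ m) (z0 (xs ! 0) (xs ! 1)))) = 0)"
    by (rule tc_cong[OF T]) simp
  have T2: "tc 2 (\<lambda>xs. lhd (snd (prod_decode ((mstep f ^^ (LEAST m. fst (prod_decode ((mstep f ^^ m) (z0 (xs ! 0) (xs ! 1)))) = 0)) (z0 (xs ! 0) (xs ! 1))))))"
    by (intro tc_lhd tc_snd tc_funpow1[OF st T'] tc_z0 tc_proj; simp)
  have "tc 2 (\<lambda>ys. code f (ys ! 0) (ys ! 1))"
    by (rule tc_cong[OF T2]) (simp only: code_machine)
  then show ?thesis by (rule tc_app2') (rule A, rule B)
qed


lemma Tree_iso_root:
  assumes nx: "\<not> cyclic f x" and ny: "\<not> cyclic g y" and h: "Tree_iso f x g y h"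
  shows "h x = y"
proof (rule ccontr)
  assume ne: "h x \<noteq> y"
  have bij: "bij_betw h (tree f x) (tree g y)" and edge: "\<forall>a\<in>tree f x. \<forall>b\<in>tree f x. f a = b \<longleftrightarrow> g (h a) = h b"
    using h unfolding Tree_iso_def digraph_iso_def tree_edge_def by auto
  have hx: "h x \<in> tree g y" using bij tree_root by (metis bij_betw_apply)
  then have "g (h x) \<in> tree g y" using depth_Suc[OF ny hx ne] by auto
  then obtain c where c: "c \<in> tree f x" "h c = g (h x)" using bij by (metis bij_betw_def imageE)
  then have "f x = c" using edge tree_root by metis
  then show False using root_f_notin[OF nx] c by auto
qed

lemma TI_Eq: "is_21_1 f \<Longrightarrow> is_21_1 g \<Longrightarrow> \<not> cyclic f x \<Longrightarrow> \<not> cyclic g y \<Longrightarrow> Tree_isomorphic f x g y \<Longrightarrow> Eq f g x y"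
  unfolding Tree_isomorphic_def using Tree_iso_Eq Tree_iso_root tree_root by metis

lemma Tree_iso_cong: "Tree_iso f x g y h \<Longrightarrow> (\<And>a. a \<in> tree f x \<Longrightarrow> h' a = h a) \<Longrightarrow> Tree_iso f x g y h'"
  unfolding Tree_iso_def digraph_iso_def using bij_betw_cong by (metis (no_types, lifting))

definition Nset :: "(nat \<Rightarrow> nat) \<Rightarrow> (nat \<Rightarrow> nat) \<Rightarrow> (nat \<Rightarrow> nat) \<Rightarrow> nat \<Rightarrow> nat \<Rightarrow> nat \<Rightarrow> bool" where
  "Nset f g I p q n \<longleftrightarrow> branching f p \<noteq> 2 \<or> I p = 1 \<or> code f (pre1 f p) n \<noteq> code g (pre1 g q) n \<or> code f (pre1 f p) n \<noteq> code g (pre2 g q) n"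

definition sN :: "(nat \<Rightarrow> nat) \<Rightarrow> (nat \<Rightarrow> nat) \<Rightarrow> (nat \<Rightarrow> nat) \<Rightarrow> nat \<Rightarrow> nat \<Rightarrow> nat \<Rightarrow> bool" where
  "sN f g I p q N \<longleftrightarrow> branching f p \<noteq> 2 \<or> I p = 1 \<or> code f (pre1 f p) N = code g (pre1 g q) N"

definition sc :: "(nat \<Rightarrow> nat) \<Rightarrow> (nat \<Rightarrow> nat) \<Rightarrow> (nat \<Rightarrow> nat) \<Rightarrow> nat \<Rightarrow> nat \<Rightarrow> bool" where
  "sc f g I p q = sN f g I p q (LEAST n. Nset f g I p q n)"

lemma iso_fun_01: "iso_fun f p = 1 \<or> iso_fun f p = 0"
  unfolding iso_fun_def by auto

lemma iso_fun_1:
  assumes f: "is_21_1 f" and "iso_fun f p = 1"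
  shows "Tree_isomorphic f (pre1 f p) f (pre2 f p) \<or> Tree_isomorphic f (pre2 f p) f (pre1 f p)"
proof -
  obtain x1 x2 where x: "x1 \<noteq> x2" "f x1 = p" "f x2 = p" "Tree_isomorphic f x1 f x2"
    using assms(2) unfolding iso_fun_def by (auto split: if_splits)
  then have "x1 = pre1 f p \<or> x1 = pre2 f p" "x2 = pre1 f p \<or> x2 = pre2 f p" using preimage_iff[OF f] by auto
  then show ?thesis using x by auto
qed

lemma iso_fun_0:
  assumes f: "is_21_1 f" and b: "branching f p = 2" and "iso_fun f p = 0"
  shows "\<not> Tree_isomorphic f (pre1 f p) f (pre2 f p)"
proof -
  have "pre1 f p \<noteq> pre2 f p" "f (pre1 f p) = p" "f (pre2 f p) = p" using pre2_neq[OF f b] f_pre1[OF f] f_pre2[OF f] by auto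
  then show ?thesis using assms(3) unfolding iso_fun_def by (auto split: if_splits)
qed

context
  fixes f g :: "nat \<Rightarrow> nat" and I :: "nat \<Rightarrow> nat" and a0 :: nat
  assumes f21: "is_21_1 f" and g21: "is_21_1 g" and nca: "\<not> cyclic f a0"
    and Ispec: "\<And>p. branching f p = 2 \<Longrightarrow> I p = iso_fun f p"
begin

lemma pre_tree: "p \<in> tree f a0 \<Longrightarrow> pre1 f p \<in> tree f a0 \<and> pre2 f p \<in> tree f a0"
  using tree_pre f_pre1[OF f21] f_pre2[OF f21] by blast

lemma tree_noncyc: "p \<in> tree f a0 \<Longrightarrow> \<not> cyclic f p"
  unfolding tree_def using noncyc_below[OF nca] by blast

lemma sc_facts:
  assumes p: "p \<in> tree f a0" and E: "Eq f g p q"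
  shows "(\<exists>n. Nset f g I p q n) \<and> (branching f p = 2 \<longrightarrow> (sc f g I p q \<longleftrightarrow> Eq f g (pre1 f p) (pre1 g q)))"
proof (cases "branching f p = 2")
  case False
  then show ?thesis unfolding Nset_def by auto
next
  case b: True
  have ch: "(Eq f g (pre1 f p) (pre1 g q) \<and> Eq f g (pre2 f p) (pre2 g q)) \<or>
         (Eq f g (pre1 f p) (pre2 g q) \<and> Eq f g (pre2 f p) (pre1 g q))" by (rule Eq_children[OF E])
  have nc: "\<not> cyclic f (pre1 f p)" "\<not> cyclic f (pre2 f p)" using pre_tree[OF p] tree_noncyc by auto
  show ?thesis
  proof (cases "I p = 1")
    case True
    then have "iso_fun f p = 1" using Ispec b by simp
    then have "Eq f f (pre1 f p) (pre2 f p)"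
      using iso_fun_1[OF f21] TI_Eq[OF f21 f21] nc Eq_sym by metis
    then have "Eq f g (pre1 f p) (pre1 g q)" using ch Eq_trans by metis
    moreover have "sc f g I p q" unfolding sc_def sN_def using True by auto
    ultimately show ?thesis unfolding Nset_def using True by auto
  next
    case False
    then have "iso_fun f p = 0" using Ispec b iso_fun_01 by metis
    then have nE: "\<not> Eq f f (pre1 f p) (pre2 f p)"
      using iso_fun_0[OF f21 b] Eq_Tree_iso[OF f21 f21 nc] by blast
    have one: "Eq f g (pre1 f p) (pre1 g q) \<longleftrightarrow> \<not> Eq f g (pre1 f p) (pre2 g q)"
      using ch nE by (meson Eq_sym Eq_trans)
    have ex: "\<exists>n. Nset f g I p q n"
    proof (rule ccontr)
      assume "\<not> (\<exists>n. Nset f g I p q n)"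
      then have "Eq f g (pre1 f p) (pre1 g q)" "Eq f g (pre1 f p) (pre2 g q)"
        unfolding Nset_def Eq_def by auto
      then show False using one by blast
    qed
    define N where "N = (LEAST n. Nset f g I p q n)"
    have NN: "Nset f g I p q N" unfolding N_def using ex by (rule LeastI_ex)
    have "sc f g I p q \<longleftrightarrow> Eq f g (pre1 f p) (pre1 g q)"
    proof (cases "Eq f g (pre1 f p) (pre1 g q)")
      case True
      then show ?thesis unfolding sc_def N_def[symmetric] sN_def using b False Eq_def by auto
    next
      case nt: False
      then have "Eq f g (pre1 f p) (pre2 g q)" using one by blast
      then have "code f (pre1 f p) N \<noteq> code g (pre1 g q) N" using NN b False unfolding Nset_def Eq_def by auto
      then show ?thesis unfolding sc_def N_def[symmetric] sN_def using b False nt by auto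
    qed
    then show ?thesis using ex by auto
  qed
qed

lemma constr_sc: "\<not> cyclic g b0 \<Longrightarrow> Eq f g a0 b0 \<Longrightarrow> constr f g a0 b0 (sc f g I)"
  by unfold_locales (use f21 g21 nca sc_facts in auto)

end


definition NP :: "(nat \<Rightarrow> nat) \<Rightarrow> (nat \<Rightarrow> nat) \<Rightarrow> (nat \<Rightarrow> nat) \<Rightarrow> nat list \<Rightarrow> bool" where
  "NP f g I zs = Nset f g I ((f ^^ (zs ! 3 - zs ! 1)) (zs ! 4)) (zs ! 2) (zs ! 0)"

definition ME :: "(nat \<Rightarrow> nat) \<Rightarrow> (nat \<Rightarrow> nat) \<Rightarrow> (nat \<Rightarrow> nat) \<Rightarrow> nat list \<Rightarrow> nat" where
  "ME f g I zs = Ms f g (\<lambda>_ _. sN f g I ((f ^^ (zs ! 3 - zs ! 1)) (zs ! 4)) (zs ! 2) (zs ! 0))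
      ((f ^^ (zs ! 3 - zs ! 1)) (zs ! 4)) (zs ! 2) ((f ^^ (zs ! 3 - Suc (zs ! 1))) (zs ! 4))"

definition Stp :: "(nat \<Rightarrow> nat) \<Rightarrow> (nat \<Rightarrow> nat) \<Rightarrow> (nat \<Rightarrow> nat) \<Rightarrow> nat list \<Rightarrow> nat option" where
  "Stp f g I xs = (case (if \<exists>k. NP f g I (k # xs) then Some (LEAST k. NP f g I (k # xs)) else None) of
      None \<Rightarrow> None | Some y \<Rightarrow> Some (ME f g I (y # xs)))"

definition Dp :: "(nat \<Rightarrow> nat) \<Rightarrow> nat \<Rightarrow> nat list \<Rightarrow> nat option" where
  "Dp f a0 xs = (if \<exists>k. (f ^^ k) (xs ! 0) = a0 then Some (LEAST k. (f ^^ k) (xs ! 0) = a0) else None)"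

definition Phi :: "(nat \<Rightarrow> nat) \<Rightarrow> (nat \<Rightarrow> nat) \<Rightarrow> (nat \<Rightarrow> nat) \<Rightarrow> nat \<Rightarrow> nat \<Rightarrow> nat \<Rightarrow> nat option" where
  "Phi f g I a0 b0 a = (case Dp f a0 [a] of None \<Rightarrow> None | Some d \<Rightarrow> piter (\<lambda>_. Some b0) (Stp f g I) d [d, a])"

context
  fixes f g :: "nat \<Rightarrow> nat" and I :: "nat \<Rightarrow> nat"
  assumes f21: "is_21_1 f" and g21: "is_21_1 g" and cf: "computable f" and cg: "computable g"
    and cbf: "computable (branching f)" and cbg: "computable (branching g)"
    and Itc: "tc 1 (\<lambda>ys. I (ys ! 0))"
begin

lemma pc_Phi: "partial_computable (Phi f g I a0 b0)"
proof -
  have tcI: "tc n A \<Longrightarrow> tc n (\<lambda>xs. I (A xs))" for n A by (rule tc_app1'[OF Itc])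
  note R = tc_rules tc_fun[OF cbf] tc_fun[OF cbg] tcI tc_code[OF cf f21 cbf] tc_code[OF cg g21 cbg]
    tc_pre1[OF cf f21] tc_pre2[OF cf f21 cbf] tc_pre1[OF cg g21] tc_pre2[OF cg g21 cbg] tc_funpow[OF cf]
  have NP: "tcp (Suc 4) (NP f g I)"
    unfolding NP_def Nset_def by (intro R; simp)
  have ME: "tc (Suc 4) (ME f g I)"
    unfolding ME_def Ms_def sN_def by (intro R; simp)
  have St: "pc 4 (Stp f g I)"
    unfolding Stp_def by (rule pc_let[OF pc_mu[OF NP] ME])
  have P3: "pc (Suc 2) (\<lambda>ys. piter (\<lambda>_. Some b0) (Stp f g I) (hd ys) (tl ys))"
    by (rule pc_pr[OF pc_of_tc[OF tc_const]]) (use St in \<open>simp add: numeral_eq_Suc\<close>)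
  have P2: "pc (Suc (Suc 0)) (\<lambda>xs. (\<lambda>ys. piter (\<lambda>_. Some b0) (Stp f g I) (hd ys) (tl ys))
            (map (\<lambda>G. G xs) [\<lambda>xs. xs ! 0, \<lambda>xs. xs ! 0, \<lambda>xs. xs ! 1]))"
    by (rule pc_compt[OF P3]) (auto intro: tc_proj)
  have P2': "pc (Suc (Suc 0)) (\<lambda>xs. piter (\<lambda>_. Some b0) (Stp f g I) (xs ! 0) [xs ! 0, xs ! 1])"
    by (rule pc_cong[OF P2]) simp
  have D0: "tcp (Suc (Suc 0)) (\<lambda>ys. (f ^^ (ys ! 0)) (ys ! 1) = a0)"
    by (intro R; simp)
  have D: "pc (Suc 0) (Dp f a0)"
    unfolding Dp_def by (rule pc_cong[OF pc_mu[OF D0]]) simp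
  have F: "pc (Suc 0) (\<lambda>xs. case Dp f a0 xs of None \<Rightarrow> None | Some y \<Rightarrow> piter (\<lambda>_. Some b0) (Stp f g I) ((y # xs) ! 0) [(y # xs) ! 0, (y # xs) ! 1])"
    by (rule pc_bind[OF D P2'])
  then obtain e where e: "\<forall>xs. length xs = Suc 0 \<longrightarrow> (\<forall>y. eval e xs y \<longleftrightarrow>
     (case Dp f a0 xs of None \<Rightarrow> None | Some y \<Rightarrow> piter (\<lambda>_. Some b0) (Stp f g I) ((y # xs) ! 0) [(y # xs) ! 0, (y # xs) ! 1]) = Some y)"
    unfolding pc_def by blast
  show ?thesis unfolding partial_computable_def
  proof (intro exI[of _ e] allI)
    fix x y
    have "eval e [x] y \<longleftrightarrow> (case Dp f a0 [x] of None \<Rightarrow> None | Some y \<Rightarrow> piter (\<lambda>_. Some b0) (Stp f g I) ((y # [x]) ! 0) [(y # [x]) ! 0, (y # [x]) ! 1]) = Some y"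
      using e by simp
    then show "eval e [x] y \<longleftrightarrow> Phi f g I a0 b0 x = Some y" unfolding Phi_def by (cases "Dp f a0 [x]") auto
  qed
qed

end


lemma Phi_correct:
  assumes f21: "is_21_1 f" and g21: "is_21_1 g" and nca: "\<not> cyclic f a0" and ncb: "\<not> cyclic g b0"
    and Ispec: "\<And>p. branching f p = 2 \<Longrightarrow> I p = iso_fun f p" and E0: "Eq f g a0 b0"
    and a: "a \<in> tree f a0"
  shows "Phi f g I a0 b0 a = Some (constr.img f g a0 b0 (sc f g I) a)"
proof -
  interpret C: constr f g a0 b0 "sc f g I" by (rule constr_sc[OF f21 g21 nca Ispec ncb E0])
  define d where "d = depth f a0 a"
  have ex: "\<exists>k. (f ^^ k) a = a0" using a unfolding tree_def by auto
  have D: "Dp f a0 [a] = Some d" unfolding Dp_def d_def depth_def using ex by auto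
  have fd: "(f ^^ d) a = a0" unfolding d_def by (rule depth_tree[OF a])
  have main: "i \<le> d \<Longrightarrow> piter (\<lambda>_. Some b0) (Stp f g I) i [d, a] = Some (imgd f (Ms f g (sc f g I)) b0 i ((f ^^ (d - i)) a))" for i
  proof (induction i)
    case 0 then show ?case by simp
  next
    case (Suc i)
    define p where "p = (f ^^ (d - i)) a"
    define ch where "ch = (f ^^ (d - Suc i)) a"
    define y where "y = imgd f (Ms f g (sc f g I)) b0 i p"
    have IH: "piter (\<lambda>_. Some b0) (Stp f g I) i [d, a] = Some y" using Suc unfolding y_def p_def by simp
    have fch: "f ch = p" unfolding ch_def p_def using Suc.prems
      by (metis Suc_diff_Suc Suc_le_lessD funpow_simps_right(2) comp_apply funpow_swap1)
    have "(f ^^ i) p = a0" unfolding p_def using Suc.prems fd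
      by (metis Suc_leD funpow_add le_add_diff_inverse comp_apply)
    then have pt: "p \<in> tree f a0" and pd: "depth f a0 p = i"
      unfolding tree_def using depth_eq[OF nca] by auto
    have yimg: "y = C.img p" unfolding C.img_def y_def pd by simp
    have Ep: "Eq f g p y" using C.img_Eq[OF pt] yimg by simp
    have exn: "\<exists>n. Nset f g I p y n" using sc_facts[OF f21 g21 nca Ispec pt Ep] by blast
    have np: "NP f g I (k # [i, y, d, a]) = Nset f g I p y k" for k by (simp add: NP_def p_def)
    have me: "ME f g I (k # [i, y, d, a]) = Ms f g (\<lambda>_ _. sN f g I p y k) p y ch" for k
      by (simp add: ME_def p_def ch_def)
    have "Stp f g I [i, y, d, a] = Some (Ms f g (\<lambda>_ _. sN f g I p y (LEAST k. Nset f g I p y k)) p y ch)"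
      unfolding Stp_def np me using exn by simp
    also have "\<dots> = Some (Ms f g (sc f g I) p y ch)" by (simp add: Ms_def sc_def)
    finally have "Stp f g I [i, y, d, a] = Some (Ms f g (sc f g I) p y ch)" .
    moreover have "imgd f (Ms f g (sc f g I)) b0 (Suc i) ch = Ms f g (sc f g I) p y ch"
      using fch unfolding y_def by simp
    ultimately show ?case using IH ch_def by simp
  qed
  have "piter (\<lambda>_. Some b0) (Stp f g I) d [d, a] = Some (C.img a)"
    using main[of d] unfolding C.img_def d_def by simp
  then show ?thesis unfolding Phi_def D by simp
qed

lemma part1_single:
  assumes f21: "is_21_1 f" and g21: "is_21_1 g" and cf: "computable f" and cg: "computable g"
    and cbf: "computable (branching f)" and cbg: "computable (branching g)"
    and Itc: "tc 1 (\<lambda>ys. I (ys ! 0))"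
    and nca: "\<not> cyclic f a0" and ncb: "\<not> cyclic g b0"
    and Ispec: "\<And>p. branching f p = 2 \<Longrightarrow> I p = iso_fun f p" and TI: "Tree_isomorphic f a0 g b0"
  shows "\<exists>\<phi>. partial_computable \<phi> \<and> (\<forall>a\<in>tree f a0. \<phi> a \<noteq> None) \<and> Tree_iso f a0 g b0 (\<lambda>a. the (\<phi> a))"
proof -
  have E0: "Eq f g a0 b0" by (rule TI_Eq[OF f21 g21 nca ncb TI])
  interpret C: constr f g a0 b0 "sc f g I" by (rule constr_sc[OF f21 g21 nca Ispec ncb E0])
  have pc: "partial_computable (Phi f g I a0 b0)" by (rule pc_Phi[OF f21 g21 cf cg cbf cbg Itc])
  have cor: "\<And>a. a \<in> tree f a0 \<Longrightarrow> Phi f g I a0 b0 a = Some (C.img a)"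
    by (rule Phi_correct[OF f21 g21 nca ncb Ispec E0])
  have "Tree_iso f a0 g b0 (\<lambda>a. the (Phi f g I a0 b0 a))"
    by (rule Tree_iso_cong[OF C.img_iso]) (simp add: cor)
  then show ?thesis using pc cor by blast
qed


lemma fp_add: "(f ^^ (a + b)) x = (f ^^ a) ((f ^^ b) x)"
  by (simp add: funpow_add)

context
  fixes f :: "nat \<Rightarrow> nat" and c :: nat
  assumes cc: "cyclic f c"
begin

abbreviation "K \<equiv> cycle_len f c"

lemma K_prop: "0 < K \<and> (f ^^ K) c = c"
  using cc unfolding cyclic_def cycle_len_def by (metis (mono_tags, lifting) LeastI)

lemma K_min: "0 < t \<Longrightarrow> (f ^^ t) c = c \<Longrightarrow> K \<le> t"
  unfolding cycle_len_def by (rule Least_le) simp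

lemma K_mult: "(f ^^ (K * q)) c = c"
  by (induction q) (auto simp: fp_add K_prop simp del: funpow.simps)

lemma K_mod: "(f ^^ t) c = (f ^^ (t mod K)) c"
proof -
  have "t = t mod K + K * (t div K)" by simp
  then have "(f ^^ t) c = (f ^^ (t mod K)) ((f ^^ (K * (t div K))) c)" by (metis fp_add)
  then show ?thesis using K_mult by simp
qed

lemma mult_period: "(f ^^ P) z = z \<Longrightarrow> (f ^^ (j * P)) z = z"
  by (induction j) (auto simp: fp_add simp del: funpow.simps)

lemma on_cycle: "cyclic f z \<Longrightarrow> (f ^^ j) z = c \<Longrightarrow> \<exists>t. z = (f ^^ t) c"
proof -
  assume "cyclic f z" and j: "(f ^^ j) z = c"
  then obtain P where P: "P > 0" "(f ^^ P) z = z" unfolding cyclic_def by auto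
  have "(f ^^ (j * (P - 1))) c = (f ^^ (j * (P - 1) + j)) z" using j by (simp add: fp_add)
  also have "j * (P - 1) + j = j * P" using P(1) by (cases P) auto
  also have "(f ^^ (j * P)) z = z" by (rule mult_period[OF P(2)])
  finally show ?thesis by metis
qed

lemma cycle_pt_K: "z = (f ^^ t) c \<Longrightarrow> (f ^^ K) z = z"
  using K_prop by (metis funpow_swap')

lemma cyc_pre: "f z = c \<Longrightarrow> cyclic f z \<Longrightarrow> z = (f ^^ (K - 1)) c"
proof -
  assume fz: "f z = c" and cz: "cyclic f z"
  obtain t where t: "z = (f ^^ t) c" using on_cycle[OF cz, of 1] fz by auto
  define t' where "t' = t mod K"
  have zt: "z = (f ^^ t') c" using t K_mod unfolding t'_def by simp
  have tl: "t' < K" unfolding t'_def using K_prop by auto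
  have "(f ^^ Suc t') c = c" using zt fz by (simp add: funpow_swap1)
  then have "K \<le> Suc t'" using K_min by blast
  then have "t' = K - 1" using tl by simp
  then show ?thesis using zt by simp
qed

definition cp where "cp = (f ^^ (K - 1)) c"

lemma f_cp: "f cp = c"
  unfolding cp_def using K_prop by (metis Suc_diff_1 funpow.simps(2) comp_apply)

lemma cyc_cp: "cyclic f cp"
  unfolding cyclic_def cp_def using K_prop by (metis funpow_swap')

lemma cyc_cond: "(f ^^ n) a = c \<Longrightarrow> m \<le> n \<Longrightarrow> ((f ^^ (m + K)) a = (f ^^ m) a \<longleftrightarrow> cyclic f ((f ^^ m) a))"
proof -
  have sw: "(f ^^ (m + K)) a = (f ^^ K) ((f ^^ m) a)" by (simp only: add.commute[of m K] fp_add)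
  show "(f ^^ n) a = c \<Longrightarrow> m \<le> n \<Longrightarrow> ((f ^^ (m + K)) a = (f ^^ m) a \<longleftrightarrow> cyclic f ((f ^^ m) a))"
    unfolding sw
  proof
  assume "(f ^^ K) ((f ^^ m) a) = (f ^^ m) a"
  then show "cyclic f ((f ^^ m) a)" unfolding cyclic_def using K_prop by blast
next
  assume n: "(f ^^ n) a = c" and mn: "m \<le> n" and cz: "cyclic f ((f ^^ m) a)"
  have "(f ^^ (n - m)) ((f ^^ m) a) = c" using n mn by (metis fp_add le_add_diff_inverse2)
  then obtain t where "(f ^^ m) a = (f ^^ t) c" using on_cycle[OF cz] by blast
  then show "(f ^^ K) ((f ^^ m) a) = (f ^^ m) a" using cycle_pt_K by blast
qed
qed

lemma extree_char: "extree f c = {a. \<exists>n. (f ^^ n) a = c \<and> (\<forall>m<n. \<not> cyclic f ((f ^^ m) a))}"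
proof -
  have e: "(f ^^ n) a = c \<Longrightarrow> (\<forall>m<n. (f ^^ (m + K)) a \<noteq> (f ^^ m) a) \<longleftrightarrow> (\<forall>m<n. \<not> cyclic f ((f ^^ m) a))" for n a
    using cyc_cond[of n a] by (meson less_imp_le_nat)
  show ?thesis unfolding extree_def using e by blast
qed

lemma c_in_extree: "c \<in> extree f c"
  unfolding extree_char by (auto intro: exI[of _ 0])

lemma extree_pre: "a \<in> extree f c \<Longrightarrow> a \<noteq> c \<Longrightarrow> \<exists>z. f z = c \<and> \<not> cyclic f z \<and> a \<in> tree f z"
proof -
  assume "a \<in> extree f c" "a \<noteq> c"
  then obtain n where n: "(f ^^ n) a = c" "\<forall>m<n. \<not> cyclic f ((f ^^ m) a)" unfolding extree_char by auto
  then obtain k where k: "n = Suc k" using \<open>a \<noteq> c\<close> by (cases n) auto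
  have "f ((f ^^ k) a) = c" using n k by simp
  moreover have "\<not> cyclic f ((f ^^ k) a)" using n k by auto
  moreover have "a \<in> tree f ((f ^^ k) a)" unfolding tree_def by auto
  ultimately show ?thesis by blast
qed

lemma tree_in_extree: "f z = c \<Longrightarrow> \<not> cyclic f z \<Longrightarrow> a \<in> tree f z \<Longrightarrow> a \<in> extree f c"
proof -
  assume fz: "f z = c" and nz: "\<not> cyclic f z" and a: "a \<in> tree f z"
  then obtain j where j: "(f ^^ j) a = z" unfolding tree_def by auto
  have "(f ^^ Suc j) a = c" using j fz by simp
  moreover have "\<not> cyclic f ((f ^^ m) a)" if "m < Suc j" for m
  proof -
    have "(f ^^ (j - m)) ((f ^^ m) a) = z" using j that by (metis fp_add le_add_diff_inverse2 less_Suc_eq_le)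
    then show ?thesis using noncyc_below[OF nz] by blast
  qed
  ultimately show ?thesis unfolding extree_char by blast
qed

lemma c_notin_tree: "f z = c \<Longrightarrow> \<not> cyclic f z \<Longrightarrow> c \<notin> tree f z"
proof
  assume fz: "f z = c" and nz: "\<not> cyclic f z" and "c \<in> tree f z"
  then obtain j where "(f ^^ j) c = z" unfolding tree_def by auto
  then have "(f ^^ Suc j) z = z" using fz by (simp add: funpow_swap1)
  then show False using nz unfolding cyclic_def by blast
qed

end


lemma iso_tc:
  assumes f: "is_21_1 f" and cb: "computable (branching f)" and ic: "iso_computable f"
  shows "\<exists>I. tc 1 (\<lambda>ys. I (ys ! 0)) \<and> (\<forall>p. branching f p = 2 \<longrightarrow> I p = iso_fun f p)"
proof (cases "split_hair f = {}")
  case True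
  then show ?thesis unfolding split_hair_def by (intro exI[of _ "\<lambda>_. 0"]) (auto intro: tc_const)
next
  case False
  then obtain s0 where s0: "branching f s0 = 2" unfolding split_hair_def by auto
  obtain \<phi> where \<phi>: "partial_computable \<phi>" "\<forall>x\<in>split_hair f. \<phi> x = Some (iso_fun f x)"
    using ic unfolding iso_computable_def by blast
  obtain e where e: "\<forall>x y. eval e [x] y \<longleftrightarrow> \<phi> x = Some y" using \<phi>(1) unfolding partial_computable_def by blast
  have D: "pc 1 (\<lambda>xs. \<phi> (xs ! 0))" unfolding pc_def
    by (rule exI[of _ e]) (use e in \<open>auto simp: length_Suc_conv\<close>)
  have Sl: "tc 1 (\<lambda>xs. if branching f (xs ! 0) = 2 then xs ! 0 else s0)"
    by (intro tc_if tcp_eq tc_fun[OF cb] tc_proj tc_const) auto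
  define Sel where "Sel x = (if branching f x = 2 then x else s0)" for x
  have P: "pc 1 (\<lambda>xs. (\<lambda>xs. \<phi> (xs ! 0)) [(if branching f (xs ! 0) = 2 then xs ! 0 else s0)])"
    by (rule pc_comp1[OF D Sl])
  have "pc 1 (\<lambda>xs. Some (iso_fun f (Sel (xs ! 0))))"
    by (rule pc_cong[OF P]) (use \<phi>(2) s0 in \<open>auto simp: Sel_def split_hair_def\<close>)
  then have "tc 1 (\<lambda>xs. iso_fun f (Sel (xs ! 0)))" by (rule tc_of_pc)
  then show ?thesis by (intro exI[of _ "\<lambda>x. iso_fun f (Sel x)"]) (auto simp: Sel_def)
qed

lemma root_pre: "\<not> cyclic f z \<Longrightarrow> a \<in> tree f z \<Longrightarrow> f a = f z \<Longrightarrow> a = z"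
  using depth_Suc root_f_notin by metis

lemma extree_struct:
  assumes f: "is_21_1 f" and cc: "cyclic f c"
  shows "(branching f c \<noteq> 2 \<and> extree f c = {c}) \<or>
         (branching f c = 2 \<and> (\<exists>z. f z = c \<and> \<not> cyclic f z \<and> extree f c = insert c (tree f z) \<and> c \<notin> tree f z))"
proof -
  have fcp: "f (cp f c) = c" and ccp: "cyclic f (cp f c)" using f_cp[OF cc] cyc_cp[OF cc] by auto
  have ncp: "f z = c \<Longrightarrow> \<not> cyclic f z \<Longrightarrow> z \<noteq> cp f c" for z using ccp by auto
  show ?thesis
  proof (cases "branching f c = 2")
    case False
    then have "pre2 f c = pre1 f c" using pre2_eq1[OF f] by auto
    then have pre: "f z = c \<Longrightarrow> z = pre1 f c" for z using preimage_iff[OF f] by auto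
    have "extree f c = {c}"
    proof
      show "extree f c \<subseteq> {c}"
      proof
        fix a assume a: "a \<in> extree f c"
        show "a \<in> {c}"
        proof (rule ccontr)
          assume "a \<notin> {c}"
          then obtain z where z: "f z = c" "\<not> cyclic f z" using extree_pre[OF cc a] by auto
          then show False using pre[OF z(1)] pre[OF fcp] ncp by auto
        qed
      qed
      show "{c} \<subseteq> extree f c" using c_in_extree[OF cc] by auto
    qed
    then show ?thesis using False by auto
  next
    case True
    define z where "z = (if pre1 f c = cp f c then pre2 f c else pre1 f c)"
    have ne: "pre2 f c \<noteq> pre1 f c" using pre2_neq[OF f True] .
    have fz: "f z = c" unfolding z_def using f_pre1[OF f] f_pre2[OF f] by auto
    have zne: "z \<noteq> cp f c" unfolding z_def using ne fcp preimage_iff[OF f] by auto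
    have nz: "\<not> cyclic f z" using cyc_pre[OF cc fz] zne unfolding cp_def[OF cc] by auto
    have uniq: "f z' = c \<Longrightarrow> \<not> cyclic f z' \<Longrightarrow> z' = z" for z'
      using ncp preimage_iff[OF f] fcp unfolding z_def by metis
    have "extree f c = insert c (tree f z)"
    proof
      show "extree f c \<subseteq> insert c (tree f z)"
      proof
        fix a assume a: "a \<in> extree f c"
        show "a \<in> insert c (tree f z)"
        proof (cases "a = c")
          case False
          then obtain z' where "f z' = c" "\<not> cyclic f z'" "a \<in> tree f z'" using extree_pre[OF cc a] by auto
          then show ?thesis using uniq by auto
        qed auto
      qed
      show "insert c (tree f z) \<subseteq> extree f c"
        using c_in_extree[OF cc] tree_in_extree[OF cc fz nz] by auto
    qed
    then show ?thesis using True fz nz c_notin_tree[OF cc fz nz] by blast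
  qed
qed

lemma ext_succ: "cyclic f c \<Longrightarrow> b \<in> extree f c \<Longrightarrow> b \<noteq> c \<Longrightarrow> f b \<in> extree f c"
proof -
  assume cc: "cyclic f c" and b: "b \<in> extree f c" and ne: "b \<noteq> c"
  then obtain n where n: "(f ^^ n) b = c" "\<forall>m<n. \<not> cyclic f ((f ^^ m) b)" unfolding extree_char[OF cc] by auto
  then obtain k where k: "n = Suc k" using ne by (cases n) auto
  have "(f ^^ k) (f b) = c" using n k by (simp add: funpow_swap1[symmetric] funpow_Suc_right)
  moreover have "\<forall>m<k. \<not> cyclic f ((f ^^ m) (f b))"
    using n k by (metis Suc_mono funpow_Suc_right comp_apply)
  ultimately show ?thesis unfolding extree_char[OF cc] by blast
qed


lemma exTree_root:
  assumes cc: "cyclic f c" and cd: "cyclic g d" and h: "exTree_iso f c g d h"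
  shows "h c = d"
proof (rule ccontr)
  assume ne: "h c \<noteq> d"
  have bij: "bij_betw h (extree f c) (extree g d)"
    and edge: "\<forall>a\<in>extree f c. \<forall>b\<in>extree f c. extree_edge f c a b \<longleftrightarrow> extree_edge g d (h a) (h b)"
    using h unfolding exTree_iso_def digraph_iso_def by auto
  have hc: "h c \<in> extree g d" using bij c_in_extree[OF cc] by (metis bij_betw_apply)
  then have "g (h c) \<in> extree g d" using ext_succ[OF cd hc ne] by auto
  then obtain a where a: "a \<in> extree f c" "h a = g (h c)" using bij by (metis bij_betw_def imageE)
  then have "extree_edge g d (h c) (h a)" using ne unfolding extree_edge_def by auto
  then have "extree_edge f c c a" using edge a c_in_extree[OF cc] by blast
  then show False unfolding extree_edge_def by auto
qed

lemma part2:
  assumes f21: "is_21_1 f" and g21: "is_21_1 g" and cf: "computable f" and cg: "computable g"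
    and cbf: "computable (branching f)" and cbg: "computable (branching g)"
    and Itc: "tc 1 (\<lambda>ys. I (ys ! 0))" and Ispec: "\<And>p. branching f p = 2 \<Longrightarrow> I p = iso_fun f p"
    and cc: "cyclic f c" and cd: "cyclic g d" and h: "exTree_iso f c g d h"
  shows "\<exists>\<phi>. partial_computable \<phi> \<and> (\<forall>a\<in>extree f c. \<phi> a \<noteq> None) \<and> exTree_iso f c g d (\<lambda>a. the (\<phi> a))"
proof -
  have bij: "bij_betw h (extree f c) (extree g d)"
    and edge: "\<forall>a\<in>extree f c. \<forall>b\<in>extree f c. extree_edge f c a b \<longleftrightarrow> extree_edge g d (h a) (h b)"
    using h unfolding exTree_iso_def digraph_iso_def by auto
  have hc: "h c = d" by (rule exTree_root[OF cc cd h])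
  have imgh: "h ` extree f c = extree g d" using bij by (simp add: bij_betw_def)
  have injh: "inj_on h (extree f c)" using bij by (simp add: bij_betw_def)
  from extree_struct[OF f21 cc] show ?thesis
  proof
    assume A: "branching f c \<noteq> 2 \<and> extree f c = {c}"
    then have B: "extree g d = {d}" using imgh hc by auto
    have "pc 1 (\<lambda>xs. Some d)" by (rule pc_of_tc[OF tc_const])
    then obtain e where e: "\<forall>xs. length xs = 1 \<longrightarrow> (\<forall>y. eval e xs y \<longleftrightarrow> Some d = Some y)" unfolding pc_def by blast
    have pcd: "partial_computable (\<lambda>_. Some d)" unfolding partial_computable_def
      by (rule exI[of _ e]) (use e in auto)
    have "exTree_iso f c g d (\<lambda>a. the (Some d))"
      unfolding exTree_iso_def digraph_iso_def using A B by (auto simp: extree_edge_def bij_betw_def)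
    then show ?thesis using pcd by blast
  next
    assume A: "branching f c = 2 \<and> (\<exists>z. f z = c \<and> \<not> cyclic f z \<and> extree f c = insert c (tree f z) \<and> c \<notin> tree f z)"
    then obtain z where z: "f z = c" "\<not> cyclic f z" "extree f c = insert c (tree f z)" "c \<notin> tree f z" by blast
    have hz: "h z \<noteq> d" using injh z hc tree_root unfolding inj_on_def by (metis insert_iff)
    have "h z \<in> extree g d" using imgh z tree_root by blast
    then have "extree g d \<noteq> {d}" using hz by auto
    then obtain w where w: "g w = d" "\<not> cyclic g w" "extree g d = insert d (tree g w)" "d \<notin> tree g w"
      using extree_struct[OF g21 cd] by blast
    have imT: "h ` tree f z = tree g w"
    proof -
      have "h ` insert c (tree f z) = insert d (tree g w)" using imgh z w by simp
      then have "insert d (h ` tree f z) = insert d (tree g w)" using hc by simp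
      moreover have "d \<notin> h ` tree f z" using injh z hc unfolding inj_on_def by auto
      ultimately show ?thesis using w(4) by (metis insert_ident)
    qed
    have TI: "Tree_iso f z g w h"
      unfolding Tree_iso_def digraph_iso_def tree_edge_def
    proof (intro conjI ballI)
      show "bij_betw h (tree f z) (tree g w)" using injh z imT by (auto simp: bij_betw_def intro: inj_on_subset)
    next
      fix a b assume a: "a \<in> tree f z" and b: "b \<in> tree f z"
      have hat: "h a \<in> tree g w" using imT a by blast
      have "a \<noteq> c" using a z(4) by auto
      moreover have "h a \<noteq> d" using hat w(4) by auto
      ultimately show "f a = b \<longleftrightarrow> g (h a) = h b" using edge a b z unfolding extree_edge_def by auto
    qed
    then have "Tree_isomorphic f z g w" unfolding Tree_isomorphic_def by blast
    then obtain \<psi> where \<psi>: "partial_computable \<psi>" "\<forall>a\<in>tree f z. \<psi> a \<noteq> None" "Tree_iso f z g w (\<lambda>a. the (\<psi> a))"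
      using part1_single[OF f21 g21 cf cg cbf cbg Itc z(2) w(2) Ispec] by blast
    let ?m = "\<lambda>a. the (\<psi> a)"
    obtain e where e: "\<forall>x y. eval e [x] y \<longleftrightarrow> \<psi> x = Some y" using \<psi>(1) unfolding partial_computable_def by blast
    have D: "pc 1 (\<lambda>xs. \<psi> (xs ! 0))" unfolding pc_def
      by (rule exI[of _ e]) (use e in \<open>auto simp: length_Suc_conv\<close>)
    have Sl: "tc 1 (\<lambda>xs. if xs ! 0 = c then z else xs ! 0)"
      by (intro tc_if tcp_eq tc_proj tc_const) auto
    have P: "pc 1 (\<lambda>xs. (\<lambda>xs. \<psi> (xs ! 0)) [if xs ! 0 = c then z else xs ! 0])" by (rule pc_comp1[OF D Sl])
    have B: "tc (Suc 1) (\<lambda>ys. if ys ! 1 = c then d else ys ! 0)"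
      by (intro tc_if tcp_eq tc_proj tc_const) auto
    have P2: "pc 1 (\<lambda>xs. case (\<lambda>xs. \<psi> (xs ! 0)) [if xs ! 0 = c then z else xs ! 0] of None \<Rightarrow> None
                 | Some y \<Rightarrow> Some ((\<lambda>ys. if ys ! 1 = c then d else ys ! 0) (y # xs)))"
      by (rule pc_let[OF P B])
    define \<phi> where "\<phi> a = (case \<psi> (if a = c then z else a) of None \<Rightarrow> None | Some y \<Rightarrow> Some (if a = c then d else y))" for a
    obtain e2 where e2: "\<forall>xs. length xs = 1 \<longrightarrow> (\<forall>y. eval e2 xs y \<longleftrightarrow> (case (\<lambda>xs. \<psi> (xs ! 0)) [if xs ! 0 = c then z else xs ! 0] of None \<Rightarrow> None
                 | Some y \<Rightarrow> Some ((\<lambda>ys. if ys ! 1 = c then d else ys ! 0) (y # xs))) = Some y)"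
      using P2 unfolding pc_def by blast
    have pcphi: "partial_computable \<phi>" unfolding partial_computable_def
    proof (intro exI[of _ e2] allI)
      fix x y
      show "eval e2 [x] y \<longleftrightarrow> \<phi> x = Some y" using e2[rule_format, of "[x]" y]
        unfolding \<phi>_def by (cases "\<psi> (if x = c then z else x)") auto
    qed
    have "\<psi> z \<noteq> None" using \<psi>(2) tree_root[of z f] by blast
    then have phic: "\<phi> c = Some d" unfolding \<phi>_def by (cases "\<psi> z") auto
    have phia: "a \<in> tree f z \<Longrightarrow> \<phi> a = Some (?m a)" for a unfolding \<phi>_def using \<psi>(2) z(4)
      by (cases "\<psi> a") auto
    have bm: "bij_betw ?m (tree f z) (tree g w)" and em: "\<forall>a\<in>tree f z. \<forall>b\<in>tree f z. f a = b \<longleftrightarrow> g (?m a) = ?m b"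
      using \<psi>(3) unfolding Tree_iso_def digraph_iso_def tree_edge_def by auto
    have mz: "?m z = w" using Tree_iso_root[OF z(2) w(2) \<psi>(3)] .
    have mT: "a \<in> tree f z \<Longrightarrow> ?m a \<in> tree g w" for a using bm by (metis bij_betw_apply)
    have "exTree_iso f c g d (\<lambda>a. the (\<phi> a))"
      unfolding exTree_iso_def digraph_iso_def z(3) w(3)
    proof (intro conjI ballI)
      show "bij_betw (\<lambda>a. the (\<phi> a)) (insert c (tree f z)) (insert d (tree g w))"
      proof -
        have "bij_betw (\<lambda>a. the (\<phi> a)) (tree f z) (tree g w) = bij_betw ?m (tree f z) (tree g w)"
          by (rule bij_betw_cong) (simp add: phia)
        then have bb: "bij_betw (\<lambda>a. the (\<phi> a)) (tree f z) (tree g w)" using bm by simp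
        then have "inj_on (\<lambda>a. the (\<phi> a)) (tree f z)" "(\<lambda>a. the (\<phi> a)) ` tree f z = tree g w"
          by (auto simp: bij_betw_def)
        then show ?thesis unfolding bij_betw_def using phic z(4) w(4) by (auto simp: inj_on_insert)
      qed
    next
      fix a b assume a: "a \<in> insert c (tree f z)" and b: "b \<in> insert c (tree f z)"
      show "extree_edge f c a b \<longleftrightarrow> extree_edge g d (the (\<phi> a)) (the (\<phi> b))"
      proof (cases "a = c")
        case True then show ?thesis using phic unfolding extree_edge_def by simp
      next
        case ac: False
        then have at: "a \<in> tree f z" using a by auto
        have ma: "the (\<phi> a) = ?m a" "?m a \<noteq> d" using phia[OF at] mT[OF at] w(4) by auto
        show ?thesis
        proof (cases "b = c")
          case True
          have "f a = c \<longleftrightarrow> a = z" using root_pre[OF z(2) at] z(1) by auto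
          moreover have "g (?m a) = d \<longleftrightarrow> ?m a = w" using root_pre[OF w(2) mT[OF at]] w(1) by auto
          moreover have "?m a = w \<longleftrightarrow> a = z"
          proof
            assume "?m a = w"
            then have "?m a = ?m z" using mz by simp
            moreover have "inj_on ?m (tree f z)" using bm by (simp add: bij_betw_def)
            ultimately show "a = z" using at tree_root[of z f] by (meson inj_onD)
          qed (use mz in simp)
          ultimately show ?thesis using True ac ma phic unfolding extree_edge_def by auto
        next
          case False
          then have bt: "b \<in> tree f z" using b by auto
          show ?thesis using em at bt ma phia[OF bt] ac unfolding extree_edge_def by auto
        qed
      qed
    qed
    moreover have "\<forall>a\<in>extree f c. \<phi> a \<noteq> None" using phic phia z(3) by auto
    ultimately show ?thesis using pcphi by blast
  qed
qed

theorem lemma2p9: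
  fixes f g :: "nat \<Rightarrow> nat"
  assumes "is_21_1 f" and "is_21_1 g"
    and "computable f" and "computable g"
    and "struct_iso f g"
    and "computable (branching f)" and "computable (branching g)"
    and "iso_computable f" and "iso_computable g"
  shows "(\<forall>a0 b0. \<not> cyclic f a0 \<and> \<not> cyclic g b0 \<and> Tree_isomorphic f a0 g b0 \<longrightarrow>
           (\<exists>\<phi>. partial_computable \<phi> \<and> (\<forall>a\<in>tree f a0. \<phi> a \<noteq> None) \<and>
                 Tree_iso f a0 g b0 (\<lambda>a. the (\<phi> a))))
       \<and> (\<forall>c d. cyclic f c \<and> cyclic g d \<and> (\<exists>h. exTree_iso f c g d h) \<longrightarrow>
           (\<exists>\<phi>. partial_computable \<phi> \<and> (\<forall>a\<in>extree f c. \<phi> a \<noteq> None) \<and>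
                 exTree_iso f c g d (\<lambda>a. the (\<phi> a))))"
proof -
  obtain I where I: "tc 1 (\<lambda>ys. I (ys ! 0))" "\<forall>p. branching f p = 2 \<longrightarrow> I p = iso_fun f p"
    using iso_tc[OF assms(1) assms(6) assms(8)] by blast
  show ?thesis
  proof (intro conjI allI impI)
    fix a0 b0 assume "\<not> cyclic f a0 \<and> \<not> cyclic g b0 \<and> Tree_isomorphic f a0 g b0"
    then show "\<exists>\<phi>. partial_computable \<phi> \<and> (\<forall>a\<in>tree f a0. \<phi> a \<noteq> None) \<and> Tree_iso f a0 g b0 (\<lambda>a. the (\<phi> a))"
      using part1_single[OF assms(1-4) assms(6,7) I(1)] I(2) by blast
  next
    fix c d assume "cyclic f c \<and> cyclic g d \<and> (\<exists>h. exTree_iso f c g d h)"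
    then show "\<exists>\<phi>. partial_computable \<phi> \<and> (\<forall>a\<in>extree f c. \<phi> a \<noteq> None) \<and> exTree_iso f c g d (\<lambda>a. the (\<phi> a))"
      using part2[OF assms(1-4) assms(6,7) I(1)] I(2) by blast
  qed
qed


end
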